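(* Let $(V,v)$ be a pair of continuous upper and lower probabilities on $(\Omega,\mathcal{F})$. Let $\mathbf{Y}=\{Y_n\}_{n\in\mathbb{N}}$ be a bounded stochastic process (i.e. $\sup_{n,\omega}|Y_n(\omega)|<\infty$) which is stationary on $(\Omega,\mathcal{F},V)$ and such that for every $n\in\mathbb{N}$ the $\sigma$-algebras $\sigma(Y_k,\ k\le n)$ and $\sigma(Y_k,\ k\ge n+1)$ are independent with respect to $V$. Then there is a constant $c$ with $$v\Big(\Big\{\omega\in\Omega:\ \lim_{n\to\infty}\frac1n\sum_{k=1}^{n}Y_k(\omega)=c\Big\}\Big)=1.$$ If moreover $V$ is concave (equivalently $v$ is convex), then $c\in\left[\int_{\Omega}Y_1\, dv,\int_{\Omega}Y_1\, dV\right]$.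
   Context: For a nonempty set $\mathcal{P}$ of finitely additive probabilities on $\mathcal{F}$, $V(A)=\sup_{P\in\mathcal{P}}P(A)$ and $v(A)=\inf_{P\in\mathcal{P}}P(A)$; continuity means convergence of the set function values along increasing and along decreasing sequences of sets. $V$ is concave if $V(A\cup B)+V(A\cap B)\le V(A)+V(B)$. $\mathbf{Y}$ is stationary on $(\Omega,\mathcal{F},V)$ if for all $n\in\mathbb{N}$, $k\in\mathbb{N}_0$ and Borel $A\subseteq\mathbb{R}^{k+1}$, $V(\{(Y_n,\dots,Y_{n+k})\in A\})=V(\{(Y_{n+1},\dots,Y_{n+1+k})\in A\})$. Two $\sigma$-algebras $\mathcal{A},\mathcal{B}$ are independent with respect to $V$ if $V(A\cap B)=V(A)V(B)$ for all $A\in\mathcal{A}$, $B\in\mathcal{B}$. Choquet integral: $\int_{\Omega}\xi\, d\mu=\int_{0}^{\infty}\mu(\{\xi\ge t\})\,dt+\int_{-\infty}^0[\mu(\{\xi\ge t\})-1]\,dt$. *)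

theory Defs
  imports "HOL-Analysis.Analysis"
begin

definition fa_prob :: "'a set \<Rightarrow> 'a set set \<Rightarrow> ('a set \<Rightarrow> real) \<Rightarrow> bool" where
  "fa_prob \<Omega> F P \<longleftrightarrow>
     (\<forall>A\<in>F. 0 \<le> P A) \<and> P \<Omega> = 1 \<and>
     (\<forall>A\<in>F. \<forall>B\<in>F. A \<inter> B = {} \<longrightarrow> P (A \<union> B) = P A + P B)"

definition upper_prob :: "('a set \<Rightarrow> real) set \<Rightarrow> 'a set \<Rightarrow> real" where
  "upper_prob \<P> A = (SUP P\<in>\<P>. P A)"

definition lower_prob :: "('a set \<Rightarrow> real) set \<Rightarrow> 'a set \<Rightarrow> real" where
  "lower_prob \<P> A = (INF P\<in>\<P>. P A)"

definition continuous_setfun :: "'a set set \<Rightarrow> ('a set \<Rightarrow> real) \<Rightarrow> bool" where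
  "continuous_setfun F \<mu> \<longleftrightarrow>
     (\<forall>A. range A \<subseteq> F \<longrightarrow> incseq A \<longrightarrow> (\<lambda>n. \<mu> (A n)) \<longlonglongrightarrow> \<mu> (\<Union>n. A n)) \<and>
     (\<forall>A. range A \<subseteq> F \<longrightarrow> decseq A \<longrightarrow> (\<lambda>n. \<mu> (A n)) \<longlonglongrightarrow> \<mu> (\<Inter>n. A n))"

definition concave_setfun :: "'a set set \<Rightarrow> ('a set \<Rightarrow> real) \<Rightarrow> bool" where
  "concave_setfun F \<mu> \<longleftrightarrow>
     (\<forall>A\<in>F. \<forall>B\<in>F. \<mu> (A \<union> B) + \<mu> (A \<inter> B) \<le> \<mu> A + \<mu> B)"

definition gen_sigma :: "'a set \<Rightarrow> (nat \<Rightarrow> 'a \<Rightarrow> real) \<Rightarrow> nat set \<Rightarrow> 'a set set" where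
  "gen_sigma \<Omega> Y I = sigma_sets \<Omega> {Y k -` B \<inter> \<Omega> | k B. k \<in> I \<and> B \<in> sets borel}"

definition indep_sigma :: "('a set \<Rightarrow> real) \<Rightarrow> 'a set set \<Rightarrow> 'a set set \<Rightarrow> bool" where
  "indep_sigma \<mu> \<A> \<B> \<longleftrightarrow> (\<forall>A\<in>\<A>. \<forall>B\<in>\<B>. \<mu> (A \<inter> B) = \<mu> A * \<mu> B)"

text \<open>Stationarity (indices n \<ge> 1): the law of (Y_n,...,Y_{n+k}) under \<mu>, evaluated on
  Borel sets of R^{k+1} (the product sigma-algebra on {0..k} \<rightarrow> R), does not depend on n.\<close>
definition stationary :: "'a set \<Rightarrow> ('a set \<Rightarrow> real) \<Rightarrow> (nat \<Rightarrow> 'a \<Rightarrow> real) \<Rightarrow> bool" where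
  "stationary \<Omega> \<mu> Y \<longleftrightarrow>
     (\<forall>n\<ge>1. \<forall>k. \<forall>A\<in>sets (Pi\<^sub>M {0..k} (\<lambda>_. borel)).
        \<mu> {\<omega>\<in>\<Omega>. (\<lambda>i\<in>{0..k}. Y (n + i) \<omega>) \<in> A} =
        \<mu> {\<omega>\<in>\<Omega>. (\<lambda>i\<in>{0..k}. Y (n + 1 + i) \<omega>) \<in> A})"

definition choquet :: "'a set \<Rightarrow> ('a set \<Rightarrow> real) \<Rightarrow> ('a \<Rightarrow> real) \<Rightarrow> real" where
  "choquet \<Omega> \<mu> \<xi> =
     (LINT t:{0..}|lborel. \<mu> {\<omega>\<in>\<Omega>. \<xi> \<omega> \<ge> t}) +
     (LINT t:{..<0}|lborel. \<mu> {\<omega>\<in>\<Omega>. \<xi> \<omega> \<ge> t} - 1)"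

end

theory Submission
  imports Defs "HOL-Analysis.Analysis"
begin

locale cap_setting =
  fixes \<Omega> :: "'a set" and F :: "'a set set" and \<P> :: "('a set \<Rightarrow> real) set"
    and Y :: "nat \<Rightarrow> 'a \<Rightarrow> real"
  assumes sa: "sigma_algebra \<Omega> F"
    and P_ne: "\<P> \<noteq> {}"
    and P_fa: "\<forall>P\<in>\<P>. fa_prob \<Omega> F P"
    and contV: "continuous_setfun F (upper_prob \<P>)"
    and meas: "\<forall>n\<ge>1. \<forall>B\<in>sets borel. Y n -` B \<inter> \<Omega> \<in> F"
    and stat: "stationary \<Omega> (upper_prob \<P>) Y"
    and indep: "\<forall>n\<ge>1. indep_sigma (upper_prob \<P>)
                   (gen_sigma \<Omega> Y {1..n}) (gen_sigma \<Omega> Y {n+1..})"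
begin

abbreviation "V \<equiv> upper_prob \<P>"

interpretation S: sigma_algebra \<Omega> F by (rule sa)

lemma Fsub: "A \<in> F \<Longrightarrow> A \<subseteq> \<Omega>"
  using S.sets_into_space by auto

lemma Om_F: "\<Omega> \<in> F" by (rule S.top)
lemma empty_F: "{} \<in> F" by (rule S.empty_sets)
lemma diff_F: "A \<in> F \<Longrightarrow> B \<in> F \<Longrightarrow> A - B \<in> F"
  by (rule S.Diff)
lemma Int_F: "A \<in> F \<Longrightarrow> B \<in> F \<Longrightarrow> A \<inter> B \<in> F"
  by (rule S.Int)
lemma Un_F: "A \<in> F \<Longrightarrow> B \<in> F \<Longrightarrow> A \<union> B \<in> F"
  by (rule S.Un)

lemma P_props:
  assumes "P \<in> \<P>"
  shows "\<And>A. A \<in> F \<Longrightarrow> 0 \<le> P A" "P \<Omega> = 1"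
    "\<And>A B. A \<in> F \<Longrightarrow> B \<in> F \<Longrightarrow> A \<inter> B = {} \<Longrightarrow> P (A \<union> B) = P A + P B"
  using P_fa assms unfolding fa_prob_def by auto

lemma P_empty: assumes "P \<in> \<P>" shows "P {} = 0"
  using P_props(3)[OF assms empty_F empty_F] by simp

lemma P_diff: assumes "P \<in> \<P>" "A \<in> F" "B \<in> F" "B \<subseteq> A"
  shows "P (A - B) = P A - P B"
proof -
  have "A = (A - B) \<union> B" using assms by auto
  then have "P A = P (A - B) + P B"
    using P_props(3)[OF assms(1) diff_F[OF assms(2,3)] assms(3)] by auto
  then show ?thesis by simp
qed

lemma P_mono: assumes "P \<in> \<P>" "A \<in> F" "B \<in> F" "B \<subseteq> A"
  shows "P B \<le> P A"
  using P_diff[OF assms] P_props(1)[OF assms(1) diff_F[OF assms(2,3)]] by simp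

lemma P_le1: assumes "P \<in> \<P>" "A \<in> F" shows "P A \<le> 1"
  using P_mono[OF assms(1) Om_F assms(2) Fsub[OF assms(2)]] P_props(2)[OF assms(1)] by simp

lemma P_compl: assumes "P \<in> \<P>" "A \<in> F" shows "P (\<Omega> - A) = 1 - P A"
  using P_diff[OF assms(1) Om_F assms(2) Fsub[OF assms(2)]] P_props(2)[OF assms(1)] by simp

lemma P_union_le: assumes "P \<in> \<P>" "A \<in> F" "B \<in> F"
  shows "P (A \<union> B) \<le> P A + P B"
proof -
  have "A \<union> B = A \<union> (B - A)" by auto
  then have "P (A \<union> B) = P A + P (B - A)"
    using P_props(3)[OF assms(1,2) diff_F[OF assms(3,2)]] by auto
  moreover have "P (B - A) \<le> P B"
    using P_mono[OF assms(1) assms(3) diff_F[OF assms(3,2)]] by auto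
  ultimately show ?thesis by simp
qed

lemma bdd_P: "A \<in> F \<Longrightarrow> bdd_above ((\<lambda>P. P A) ` \<P>)"
  using P_le1 by (auto intro: bdd_aboveI[where M=1])

lemma P_le_V: "P \<in> \<P> \<Longrightarrow> A \<in> F \<Longrightarrow> P A \<le> V A"
  unfolding upper_prob_def by (rule cSUP_upper[OF _ bdd_P])

lemma V_le: assumes "A \<in> F" "\<And>P. P \<in> \<P> \<Longrightarrow> P A \<le> x" shows "V A \<le> x"
  unfolding upper_prob_def using P_ne assms(2) by (intro cSUP_least) auto

lemma V_nonneg: "A \<in> F \<Longrightarrow> 0 \<le> V A"
proof -
  assume A: "A \<in> F"
  obtain P where "P \<in> \<P>" using P_ne by auto
  then show ?thesis using P_props(1)[of P A] P_le_V[of P A] A by linarith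
qed

lemma V_le1: "A \<in> F \<Longrightarrow> V A \<le> 1"
  by (rule V_le) (auto intro: P_le1)

lemma V_empty: "V {} = 0"
  using V_le[OF empty_F, of 0] P_empty V_nonneg[OF empty_F] by force

lemma V_Om: "V \<Omega> = 1"
  using V_le[OF Om_F, of 1] P_props(2) P_le1 Om_F P_ne P_le_V
  by (metis antisym equals0I)

lemma V_mono: "A \<in> F \<Longrightarrow> B \<in> F \<Longrightarrow> B \<subseteq> A \<Longrightarrow> V B \<le> V A"
proof -
  assume h: "A \<in> F" "B \<in> F" "B \<subseteq> A"
  show ?thesis
  proof (rule V_le[OF h(2)])
    fix P assume "P \<in> \<P>"
    then show "P B \<le> V A" using P_mono[OF _ h(1,2,3)] P_le_V[OF _ h(1)] by fastforce
  qed
qed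

lemma V_union_le: "A \<in> F \<Longrightarrow> B \<in> F \<Longrightarrow> V (A \<union> B) \<le> V A + V B"
proof -
  assume h: "A \<in> F" "B \<in> F"
  show ?thesis
  proof (rule V_le[OF Un_F[OF h]])
    fix P assume "P \<in> \<P>"
    then show "P (A \<union> B) \<le> V A + V B" using P_union_le[OF _ h] P_le_V[OF _ h(1)] P_le_V[OF _ h(2)] by fastforce
  qed
qed

lemma V_compl_ge: "A \<in> F \<Longrightarrow> 1 \<le> V A + V (\<Omega> - A)"
proof -
  assume A: "A \<in> F"
  have "\<Omega> = A \<union> (\<Omega> - A)" using Fsub[OF A] by auto
  then show ?thesis using V_union_le[OF A diff_F[OF Om_F A]] V_Om by simp
qed

lemma V_inc: "range A \<subseteq> F \<Longrightarrow> incseq A \<Longrightarrow> (\<lambda>n. V (A n)) \<longlonglongrightarrow> V (\<Union>n. A n)"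
  using contV unfolding continuous_setfun_def by auto
lemma V_dec: "range A \<subseteq> F \<Longrightarrow> decseq A \<Longrightarrow> (\<lambda>n. V (A n)) \<longlonglongrightarrow> V (\<Inter>n. A n)"
  using contV unfolding continuous_setfun_def by auto

lemma UN_F: "range (A::nat \<Rightarrow> 'a set) \<subseteq> F \<Longrightarrow> (\<Union>n. A n) \<in> F"
  using sa by (simp add: sigma_algebra.countable_UN)
lemma INT_F: "range (A::nat \<Rightarrow> 'a set) \<subseteq> F \<Longrightarrow> (\<Inter>n. A n) \<in> F"
  using sa sigma_algebra.countable_INT[of \<Omega> F A UNIV] by auto

lemma V_null_UN:
  fixes A :: "nat \<Rightarrow> 'a set"
  assumes AF: "range A \<subseteq> F" and A0: "\<And>n. V (A n) = 0"
  shows "V (\<Union>n. A n) = 0"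
proof -
  define B where "B n = (\<Union>i<n. A i)" for n
  have BnF: "B n \<in> F" for n unfolding B_def using AF by (intro S.finite_UN) auto
  then have BF: "range B \<subseteq> F" by blast
  have "V (B n) = 0" for n
  proof (induction n)
    case 0 then show ?case by (simp add: B_def V_empty)
  next
    case (Suc n)
    have eq: "B (Suc n) = A n \<union> B n" unfolding B_def lessThan_Suc by blast
    have "A n \<in> F" using AF by blast
    then have "V (A n \<union> B n) \<le> V (A n) + V (B n)" using V_union_le BnF by blast
    then have "V (B (Suc n)) \<le> 0" using eq Suc.IH A0[of n] by simp
    then show ?case using V_nonneg[OF BnF[of "Suc n"]] by linarith
  qed
  moreover have "incseq B"
  proof (rule incseq_SucI)
    fix n show "B n \<subseteq> B (Suc n)" unfolding B_def lessThan_Suc by blast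
  qed
  ultimately have "(\<lambda>n. 0) \<longlonglongrightarrow> V (\<Union>n. B n)" using V_inc[OF BF] by simp
  moreover have "(\<Union>n. B n) = (\<Union>n. A n)" unfolding B_def by blast
  ultimately have "(\<lambda>n. 0::real) \<longlonglongrightarrow> V (\<Union>n. A n)" by simp
  then show ?thesis using LIMSEQ_unique[OF tendsto_const] by metis
qed

end


context cap_setting
begin

interpretation S: sigma_algebra \<Omega> F by (rule sa)

definition MG :: "nat set \<Rightarrow> 'a measure" where
  "MG I = measure_of \<Omega> (gen_sigma \<Omega> Y I) (\<lambda>_. 0)"

definition M0 :: "'a measure" where "M0 = measure_of \<Omega> F (\<lambda>_. 0)"

lemma gen_sub: "{Y k -` B \<inter> \<Omega> | k B. k \<in> I \<and> B \<in> sets borel} \<subseteq> Pow \<Omega>" by auto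

lemma gen_Pow: "gen_sigma \<Omega> Y I \<subseteq> Pow \<Omega>"
  unfolding gen_sigma_def using sigma_sets_into_sp[OF gen_sub] by blast

lemma sets_MG: "sets (MG I) = gen_sigma \<Omega> Y I"
  unfolding MG_def using sets_measure_of[OF gen_Pow] 
  by (simp add: gen_sigma_def sigma_sets_sigma_sets_eq[OF gen_sub])

lemma space_MG: "space (MG I) = \<Omega>"
  unfolding MG_def using space_measure_of[OF gen_Pow] by simp

lemma sets_M0: "sets M0 = F"
  unfolding M0_def using S.sets_into_space by (simp add: S.sigma_sets_eq)

lemma space_M0: "space M0 = \<Omega>"
  unfolding M0_def using S.sets_into_space by simp

lemma Y_MG: "i \<in> I \<Longrightarrow> Y i \<in> borel_measurable (MG I)"
  unfolding measurable_def space_MG sets_MG gen_sigma_def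
  by (auto intro!: sigma_sets.Basic)

lemma Y_M0: "1 \<le> i \<Longrightarrow> Y i \<in> borel_measurable M0"
  unfolding measurable_def space_M0 sets_M0 using meas by auto

lemma gen_sigma_F: "I \<subseteq> {1..} \<Longrightarrow> gen_sigma \<Omega> Y I \<subseteq> F"
  unfolding gen_sigma_def
  by (rule S.sigma_sets_subset) (use meas in force)

definition S :: "nat \<Rightarrow> 'a \<Rightarrow> real" where "S n \<omega> = (\<Sum>k=1..n. Y k \<omega>)"
definition R :: "nat \<Rightarrow> nat \<Rightarrow> 'a \<Rightarrow> real" where "R k n \<omega> = (\<Sum>i\<in>{k<..n}. Y i \<omega>)"

lemma R_MG[measurable]: "R k n \<in> borel_measurable (MG {k+1..})"
  unfolding R_def by (rule borel_measurable_sum) (auto intro: Y_MG)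

lemma S_M0[measurable]: "S n \<in> borel_measurable M0"
  unfolding S_def by (rule borel_measurable_sum) (auto intro: Y_M0)

lemma S_MG: "n \<le> N \<Longrightarrow> S n \<in> borel_measurable (MG {1..N})"
  unfolding S_def by (rule borel_measurable_sum) (auto intro: Y_MG)

lemma S_split: "k \<le> n \<Longrightarrow> S n \<omega> = S k \<omega> + R k n \<omega>"
proof -
  assume "k \<le> n"
  then have "{1..n} = {1..k} \<union> {k<..n}" by auto
  moreover have "{1..k} \<inter> {k<..n} = {}" by auto
  ultimately show ?thesis unfolding S_def R_def by (simp add: sum.union_disjoint)
qed

definition Tl :: "real \<Rightarrow> real \<Rightarrow> 'a set" where
  "Tl s a = {\<omega>\<in>\<Omega>. \<exists>j::nat. \<exists>M::nat. \<forall>n\<ge>M. s * S n \<omega> \<le> real n * (a - 1/(real j + 1))}"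

definition TlR :: "nat \<Rightarrow> real \<Rightarrow> real \<Rightarrow> 'a set" where
  "TlR k s a = {\<omega>\<in>\<Omega>. \<exists>j::nat. \<exists>M::nat. \<forall>n\<ge>M. s * R k n \<omega> \<le> real n * (a - 1/(real j + 1))}"

lemma TlR_meas: "TlR k s a \<in> gen_sigma \<Omega> Y {k+1..}"
proof -
  have "{\<omega>\<in>space (MG {k+1..}). \<exists>j::nat. \<exists>M::nat. \<forall>n\<ge>M. s * R k n \<omega> \<le> real n * (a - 1/(real j + 1))}
     \<in> sets (MG {k+1..})" by measurable
  then show ?thesis unfolding TlR_def space_MG sets_MG .
qed

lemma Tl_F: "Tl s a \<in> F"
proof -
  have "{\<omega>\<in>space M0. \<exists>j::nat. \<exists>M::nat. \<forall>n\<ge>M. s * S n \<omega> \<le> real n * (a - 1/(real j + 1))}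
     \<in> sets M0" by measurable
  then show ?thesis unfolding Tl_def space_M0 sets_M0 .
qed

end


lemma shift_bound:
  fixes x y :: "nat \<Rightarrow> real"
  assumes h: "\<forall>n\<ge>M. x n \<le> real n * (a - 1/(real j + 1))"
    and d: "\<forall>n\<ge>k. \<bar>x n - y n\<bar> \<le> d"
  shows "\<exists>j'::nat. \<exists>M'::nat. \<forall>n\<ge>M'. y n \<le> real n * (a - 1/(real j' + 1))"
proof -
  define n0 where "n0 = nat \<lceil>2 * (real j + 1) * \<bar>d\<bar>\<rceil>"
  have "\<forall>n\<ge>max M (max k n0). y n \<le> real n * (a - 1/(real (2*j+1) + 1))"
  proof (intro allI impI)
    fix n assume n: "max M (max k n0) \<le> n"
    have "n0 \<le> n" using n by simp
    then have "real n0 \<le> real n" by simp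
    moreover have "2 * (real j + 1) * \<bar>d\<bar> \<le> real n0" unfolding n0_def by (rule real_nat_ceiling_ge)
    ultimately have "real n \<ge> 2 * (real j + 1) * \<bar>d\<bar>" by linarith
    then have "real n / (2 * (real j + 1)) \<ge> \<bar>d\<bar>"
      by (simp add: field_simps)
    moreover have "real (2*j+1) + 1 = 2*(real j + 1)" by simp
    then have "1/(real (2*j+1) + 1) = 1/(real j + 1) - 1/(2 * (real j + 1))"
      by (simp add: field_simps)
    then have "real n * (a - 1/(real (2*j+1) + 1)) = real n * (a - 1/(real j + 1)) + real n / (2 * (real j + 1))"
      by (simp add: right_diff_distrib)
    moreover have "x n \<le> real n * (a - 1/(real j + 1))" using h n by auto
    moreover have "\<bar>x n - y n\<bar> \<le> d" using d n by auto
    ultimately show "y n \<le> real n * (a - 1/(real (2*j+1) + 1))" by linarith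
  qed
  then show ?thesis by blast
qed

context cap_setting
begin

interpretation S: sigma_algebra \<Omega> F by (rule sa)

lemma Tl_eq: "Tl s a = TlR k s a"
proof -
  have "\<exists>j M. \<forall>n\<ge>M. s * R k n \<omega> \<le> real n * (a - 1/(real j + 1))"
    if "\<forall>n\<ge>M. s * S n \<omega> \<le> real n * (a - 1/(real j + 1))" for \<omega> M j
    by (rule shift_bound[OF that, where k=k and d="\<bar>s * S k \<omega>\<bar>"])
       (auto simp: S_split algebra_simps)
  moreover have "\<exists>j M. \<forall>n\<ge>M. s * S n \<omega> \<le> real n * (a - 1/(real j + 1))"
    if "\<forall>n\<ge>M. s * R k n \<omega> \<le> real n * (a - 1/(real j + 1))" for \<omega> M j
    by (rule shift_bound[OF that, where k=k and d="\<bar>s * S k \<omega>\<bar>"])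
       (auto simp: S_split algebra_simps)
  ultimately show ?thesis unfolding Tl_def TlR_def by blast
qed

lemma Tl_tail: "Tl s a \<in> gen_sigma \<Omega> Y {k+1..}"
  using TlR_meas Tl_eq by simp

end


context cap_setting
begin

interpretation S: sigma_algebra \<Omega> F by (rule sa)

definition tailset :: "'a set \<Rightarrow> bool" where
  "tailset T \<longleftrightarrow> (\<forall>k. T \<in> gen_sigma \<Omega> Y {k+1..})"

lemma tail_F: "tailset T \<Longrightarrow> T \<in> F"
  unfolding tailset_def using gen_sigma_F[of "{0+1..}"] by auto

lemma Tl_tailset: "tailset (Tl s a)"
  unfolding tailset_def using Tl_tail by blast

lemma compl_tailset: "tailset T \<Longrightarrow> tailset (\<Omega> - T)"
  unfolding tailset_def gen_sigma_def by (auto intro: sigma_sets.Compl)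

lemma good_fin:
  assumes "tailset T" "A \<in> gen_sigma \<Omega> Y {1..N}" "1 \<le> N"
  shows "V (A \<inter> T) = V A * V T"
  using indep assms unfolding indep_sigma_def tailset_def by blast

lemma good_dec:
  fixes A :: "nat \<Rightarrow> 'a set"
  assumes AF: "range A \<subseteq> F" and dec: "decseq A" and T: "T \<in> F"
    and g: "\<And>N. V (A N \<inter> T) = V (A N) * V T"
  shows "V ((\<Inter>N. A N) \<inter> T) = V (\<Inter>N. A N) * V T"
proof -
  have r: "range (\<lambda>N. A N \<inter> T) \<subseteq> F" using AF T by (auto intro: Int_F)
  have d: "decseq (\<lambda>N. A N \<inter> T)" using dec by (auto simp: decseq_def)
  have "(\<lambda>N. V (A N \<inter> T)) \<longlonglongrightarrow> V (\<Inter>N. A N \<inter> T)" by (rule V_dec[OF r d])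
  moreover have "(\<Inter>N. A N \<inter> T) = (\<Inter>N. A N) \<inter> T" by blast
  moreover have "(\<lambda>N. V (A N) * V T) \<longlonglongrightarrow> V (\<Inter>N. A N) * V T"
    by (intro tendsto_mult_right V_dec[OF AF dec])
  ultimately show ?thesis using g LIMSEQ_unique by fastforce
qed

lemma good_inc:
  fixes A :: "nat \<Rightarrow> 'a set"
  assumes AF: "range A \<subseteq> F" and inc: "incseq A" and T: "T \<in> F"
    and g: "\<And>N. V (A N \<inter> T) = V (A N) * V T"
  shows "V ((\<Union>N. A N) \<inter> T) = V (\<Union>N. A N) * V T"
proof -
  have r: "range (\<lambda>N. A N \<inter> T) \<subseteq> F" using AF T by (auto intro: Int_F)
  have d: "incseq (\<lambda>N. A N \<inter> T)" using inc by (auto simp: incseq_def)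
  have "(\<lambda>N. V (A N \<inter> T)) \<longlonglongrightarrow> V (\<Union>N. A N \<inter> T)" by (rule V_inc[OF r d])
  moreover have "(\<Union>N. A N \<inter> T) = (\<Union>N. A N) \<inter> T" by blast
  moreover have "(\<lambda>N. V (A N) * V T) \<longlonglongrightarrow> V (\<Union>N. A N) * V T"
    by (intro tendsto_mult_right V_inc[OF AF inc])
  ultimately show ?thesis using g LIMSEQ_unique by fastforce
qed

definition Dset :: "real \<Rightarrow> real \<Rightarrow> nat \<Rightarrow> nat \<Rightarrow> 'a set" where
  "Dset s a j N = {\<omega>\<in>\<Omega>. \<forall>n\<in>{j..N+1}. s * S n \<omega> \<le> real n * (a - 1/(real j + 1))}"

definition Cset :: "real \<Rightarrow> real \<Rightarrow> nat \<Rightarrow> 'a set" where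
  "Cset s a j = {\<omega>\<in>\<Omega>. \<forall>n\<ge>j. s * S n \<omega> \<le> real n * (a - 1/(real j + 1))}"

lemma Dset_gen: "Dset s a j N \<in> gen_sigma \<Omega> Y {1..N+1}"
proof -
  interpret G: sigma_algebra \<Omega> "gen_sigma \<Omega> Y {1..N+1}"
    using sets.sigma_algebra_axioms[of "MG {1..N+1}"] unfolding sets_MG space_MG .
  have "{\<omega>\<in>\<Omega>. s * S n \<omega> \<le> real n * (a - 1/(real j + 1))} \<in> gen_sigma \<Omega> Y {1..N+1}"
    if "n \<in> {j..N+1}" for n
  proof -
    have [measurable]: "S n \<in> borel_measurable (MG {1..N+1})" using that by (intro S_MG) auto
    have "{\<omega>\<in>space (MG {1..N+1}). s * S n \<omega> \<le> real n * (a - 1/(real j + 1))} \<in> sets (MG {1..N+1})"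
      by measurable
    then show ?thesis unfolding space_MG sets_MG .
  qed
  then show ?thesis unfolding Dset_def by (intro G.sets_Collect_finite_All) auto
qed

lemma Dset_F: "Dset s a j N \<in> F"
  using Dset_gen gen_sigma_F[of "{1..N+1}"] by auto

lemma Cset_eq: "Cset s a j = (\<Inter>N. Dset s a j N)"
proof
  show "Cset s a j \<subseteq> (\<Inter>N. Dset s a j N)" unfolding Cset_def Dset_def by auto
  show "(\<Inter>N. Dset s a j N) \<subseteq> Cset s a j"
  proof
    fix \<omega> assume h: "\<omega> \<in> (\<Inter>N. Dset s a j N)"
    then have "\<omega> \<in> \<Omega>" unfolding Dset_def by auto
    moreover have "s * S n \<omega> \<le> real n * (a - 1/(real j + 1))" if "n \<ge> j" for n
      using h that unfolding Dset_def by (auto dest!: spec[of _ n])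
    ultimately show "\<omega> \<in> Cset s a j" unfolding Cset_def by auto
  qed
qed

lemma Dset_dec: "decseq (Dset s a j)"
  unfolding decseq_def Dset_def by auto

lemma Cset_F: "Cset s a j \<in> F"
  unfolding Cset_eq using Dset_F by (intro INT_F) auto

lemma Cset_inc: "incseq (Cset s a)"
proof (rule incseq_SucI)
  fix j
  show "Cset s a j \<subseteq> Cset s a (Suc j)"
  proof
    fix \<omega> assume h: "\<omega> \<in> Cset s a j"
    have "s * S n \<omega> \<le> real n * (a - 1/(real (Suc j) + 1))" if "n \<ge> Suc j" for n
    proof -
      have "s * S n \<omega> \<le> real n * (a - 1/(real j + 1))" using h that unfolding Cset_def by auto
      moreover have "1/(real (Suc j) + 1) \<le> 1/(real j + 1)" by (simp add: frac_le)
      then have "real n * (a - 1/(real j + 1)) \<le> real n * (a - 1/(real (Suc j) + 1))"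
        by (intro mult_left_mono) auto
      ultimately show ?thesis by linarith
    qed
    then show "\<omega> \<in> Cset s a (Suc j)" using h unfolding Cset_def by auto
  qed
qed

lemma Tl_UN: "Tl s a = (\<Union>j. Cset s a j)"
proof
  show "(\<Union>j. Cset s a j) \<subseteq> Tl s a" unfolding Cset_def Tl_def by blast
  show "Tl s a \<subseteq> (\<Union>j. Cset s a j)"
  proof
    fix \<omega> assume "\<omega> \<in> Tl s a"
    then obtain j M where \<omega>: "\<omega> \<in> \<Omega>" and h: "\<forall>n\<ge>M. s * S n \<omega> \<le> real n * (a - 1/(real j + 1))"
      unfolding Tl_def by auto
    have "s * S n \<omega> \<le> real n * (a - 1/(real (max j M) + 1))" if "n \<ge> max j M" for n
    proof -
      have "s * S n \<omega> \<le> real n * (a - 1/(real j + 1))" using h that by auto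
      moreover have "1/(real (max j M) + 1) \<le> 1/(real j + 1)" by (simp add: frac_le)
      then have "real n * (a - 1/(real j + 1)) \<le> real n * (a - 1/(real (max j M) + 1))"
        by (intro mult_left_mono) auto
      ultimately show ?thesis by linarith
    qed
    then have "\<omega> \<in> Cset s a (max j M)" unfolding Cset_def using \<omega> by auto
    then show "\<omega> \<in> (\<Union>j. Cset s a j)" by blast
  qed
qed

lemma Tl_mult:
  assumes T: "tailset T"
  shows "V (Tl s a \<inter> T) = V (Tl s a) * V T"
    and "V ((\<Omega> - Tl s a) \<inter> T) = V (\<Omega> - Tl s a) * V T"
proof -
  have TF: "T \<in> F" using tail_F[OF T] .
  have D: "V (Dset s a j N \<inter> T) = V (Dset s a j N) * V T" for j N
    by (rule good_fin[OF T Dset_gen]) auto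
  have C: "V (Cset s a j \<inter> T) = V (Cset s a j) * V T" for j
    unfolding Cset_eq by (rule good_dec[OF _ Dset_dec TF D]) (auto intro: Dset_F)
  show "V (Tl s a \<inter> T) = V (Tl s a) * V T"
    unfolding Tl_UN by (rule good_inc[OF _ Cset_inc TF C]) (auto intro: Cset_F)
  have D': "V ((\<Omega> - Dset s a j N) \<inter> T) = V (\<Omega> - Dset s a j N) * V T" for j N
  proof (rule good_fin[OF T, where N="N+1"])
    show "\<Omega> - Dset s a j N \<in> gen_sigma \<Omega> Y {1..N + 1}"
      using Dset_gen[of s a j N] unfolding gen_sigma_def by (rule sigma_sets.Compl)
  qed simp
  have eqC: "\<Omega> - Cset s a j = (\<Union>N. \<Omega> - Dset s a j N)" for j unfolding Cset_eq by blast
  have incD: "incseq (\<lambda>N. \<Omega> - Dset s a j N)" for j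
    using Dset_dec[of s a j] unfolding decseq_def incseq_def by blast
  have C': "V ((\<Omega> - Cset s a j) \<inter> T) = V (\<Omega> - Cset s a j) * V T" for j
    unfolding eqC by (rule good_inc[OF _ incD TF D']) (auto intro: Dset_F diff_F Om_F)
  have eqT: "\<Omega> - Tl s a = (\<Inter>j. \<Omega> - Cset s a j)" unfolding Tl_UN by blast
  have decC: "decseq (\<lambda>j. \<Omega> - Cset s a j)"
    using Cset_inc[of s a] unfolding decseq_def incseq_def by blast
  show "V ((\<Omega> - Tl s a) \<inter> T) = V (\<Omega> - Tl s a) * V T"
    unfolding eqT by (rule good_dec[OF _ decC TF C']) (auto intro: Cset_F diff_F Om_F)
qed

lemma Tl_01: "V (Tl s a) = 0 \<or> V (Tl s a) = 1"
proof -
  have "V (Tl s a) = V (Tl s a) * V (Tl s a)"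
    using Tl_mult(1)[OF Tl_tailset, of s a s a] by simp
  then show ?thesis by (metis mult_cancel_right1 mult_eq_0_iff)
qed

lemma Tl_1_compl: "V (Tl s a) = 1 \<Longrightarrow> V (\<Omega> - Tl s a) = 0"
proof -
  assume h: "V (Tl s a) = 1"
  have "(\<Omega> - Tl s a) \<inter> Tl s a = {}" by blast
  then show ?thesis using Tl_mult(2)[OF Tl_tailset, of s a s a] V_empty h by simp
qed

end


lemma covering:
  fixes y :: "nat \<Rightarrow> real" and T :: "nat \<Rightarrow> real"
  assumes T_def: "\<And>j. T j = (\<Sum>i<j. y i)"
    and yb: "\<And>i. \<bar>y i\<bar> \<le> C"
    and K: "\<bar>a\<bar> + C \<le> K"
    and bad_def: "\<And>j. bad j \<longleftrightarrow> \<not> (\<exists>n\<in>{1..N}. T (j+n) - T j \<ge> real n * a)"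
  shows "j \<le> L \<Longrightarrow> T L - T j \<ge> a * real (L - j) - K * ((\<Sum>i\<in>{j..<L}. of_bool (bad i)) + real N)"
proof (induction "L - j" arbitrary: j rule: less_induct)
  case less
  have C0: "0 \<le> C" using yb[of 0] by linarith
  have yl: "- C \<le> y i" for i using yb[of i] unfolding abs_le_iff by linarith
  have K0: "0 \<le> K" using K C0 by linarith
  have Tdiff: "T m - T j = (\<Sum>i\<in>{j..<m}. y i)" if "j \<le> m" for m j
  proof -
    have "{..<m} = {..<j} \<union> {j..<m}" using that by auto
    moreover have "{..<j} \<inter> {j..<m} = {}" by auto
    ultimately show ?thesis unfolding T_def by (simp add: sum.union_disjoint)
  qed
  have cnt0: "0 \<le> (\<Sum>i\<in>A. of_bool (bad i) :: real)" for A by (intro sum_nonneg) auto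
  show ?case
  proof (cases "L - j \<le> N")
    case True
    have "T L - T j \<ge> - C * real (L - j)"
    proof -
      have "(\<Sum>i\<in>{j..<L}. y i) \<ge> (\<Sum>i\<in>{j..<L}. - C)"
        by (intro sum_mono) (use yl in auto)
      then show ?thesis using Tdiff[OF less.prems] by (simp add: mult.commute)
    qed
    moreover have "a * real (L - j) + C * real (L - j) \<le> K * real N"
    proof -
      have "a * real (L - j) + C * real (L - j) = (a + C) * real (L - j)" by (simp add: algebra_simps)
      also have "\<dots> \<le> K * real (L - j)" using K by (intro mult_right_mono) auto
      also have "\<dots> \<le> K * real N" using True K0 by (intro mult_left_mono) auto
      finally show ?thesis .
    qed
    moreover have "K * real N \<le> K * ((\<Sum>i\<in>{j..<L}. of_bool (bad i)) + real N)"
      using K0 cnt0 by (intro mult_left_mono) auto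
    ultimately show ?thesis by linarith
  next
    case False
    then have jL: "j < L" by auto
    have split1: "{j..<L} = insert j {Suc j..<L}" using jL by auto
    show ?thesis
    proof (cases "bad j")
      case True
      have IH: "T L - T (Suc j) \<ge> a * real (L - Suc j) - K * ((\<Sum>i\<in>{Suc j..<L}. of_bool (bad i)) + real N)"
        using less.hyps[of "Suc j"] jL by auto
      have "T (Suc j) - T j = y j" unfolding T_def by simp
      moreover have "y j \<ge> - C" using yb[of j] by auto
      moreover have "(\<Sum>i\<in>{j..<L}. of_bool (bad i)) = 1 + (\<Sum>i\<in>{Suc j..<L}. of_bool (bad i) :: real)"
        unfolding split1 using True by simp
      moreover have "real (L - j) = 1 + real (L - Suc j)" using jL by auto
      moreover have "a + C \<le> K" using K by auto
      ultimately show ?thesis using IH by (simp add: algebra_simps)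
    next
      case False
      then obtain n where n: "n \<in> {1..N}" "T (j+n) - T j \<ge> real n * a" using bad_def by blast
      have jn: "j + n \<le> L" using n \<open>\<not> L - j \<le> N\<close> by auto
      have IH: "T L - T (j+n) \<ge> a * real (L - (j+n)) - K * ((\<Sum>i\<in>{j+n..<L}. of_bool (bad i)) + real N)"
        using less.hyps[of "j+n"] jn n by auto
      have "(\<Sum>i\<in>{j+n..<L}. of_bool (bad i)) \<le> (\<Sum>i\<in>{j..<L}. of_bool (bad i) :: real)"
        by (intro sum_mono2) auto
      moreover have "real (L - j) = real n + real (L - (j+n))" using jn by auto
      ultimately show ?thesis using IH n(2) K0
        by (smt (verit, best) mult_left_mono distrib_left mult.commute)
    qed
  qed
qed



context cap_setting
begin

interpretation S: sigma_algebra \<Omega> F by (rule sa)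

lemma counting:
  assumes P: "P \<in> \<P>" and fin: "finite I" and G: "\<And>i. i \<in> I \<Longrightarrow> G i \<in> F"
  shows "A \<in> F \<Longrightarrow> (\<forall>\<omega>\<in>A. (\<Sum>i\<in>I. of_bool (\<omega> \<in> G i)) \<ge> (m::real)) \<Longrightarrow>
         (\<Sum>i\<in>I. P (G i \<inter> A)) \<ge> m * P A"
  using fin G
proof (induction I arbitrary: A m rule: finite_induct)
  case empty
  show ?case
  proof (cases "A = {}")
    case True then show ?thesis using P_empty[OF P] by simp
  next
    case False
    then have "m \<le> 0" using empty by auto
    then show ?thesis using P_props(1)[OF P empty.prems(1)] by (simp add: mult_nonpos_nonneg)
  qed
next
  case (insert x I)
  have Gx: "G x \<in> F" using insert.prems by auto
  have GI: "\<And>i. i \<in> I \<Longrightarrow> G i \<in> F" using insert.prems by auto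
  have A1: "A \<inter> G x \<in> F" and A2: "A - G x \<in> F" using insert.prems(1) Gx by (auto intro: Int_F diff_F)
  have h1: "(\<Sum>i\<in>I. P (G i \<inter> (A \<inter> G x))) \<ge> (m - 1) * P (A \<inter> G x)"
  proof (rule insert.IH[OF A1 _ GI])
    show "\<forall>\<omega>\<in>A \<inter> G x. m - 1 \<le> (\<Sum>i\<in>I. of_bool (\<omega> \<in> G i))"
      using insert.prems(2) insert.hyps by auto
  qed auto
  have h2: "(\<Sum>i\<in>I. P (G i \<inter> (A - G x))) \<ge> m * P (A - G x)"
  proof (rule insert.IH[OF A2 _ GI])
    show "\<forall>\<omega>\<in>A - G x. m \<le> (\<Sum>i\<in>I. of_bool (\<omega> \<in> G i))"
      using insert.prems(2) insert.hyps by auto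
  qed auto
  have split: "P (G i \<inter> A) = P (G i \<inter> (A \<inter> G x)) + P (G i \<inter> (A - G x))" if "i \<in> I" for i
  proof -
    have "G i \<inter> A = (G i \<inter> (A \<inter> G x)) \<union> (G i \<inter> (A - G x))" by blast
    moreover have "G i \<inter> (A \<inter> G x) \<in> F" "G i \<inter> (A - G x) \<in> F"
      using GI[OF that] A1 A2 by (auto intro: Int_F)
    moreover have "(G i \<inter> (A \<inter> G x)) \<inter> (G i \<inter> (A - G x)) = {}" by blast
    ultimately show ?thesis using P_props(3)[OF P] by simp
  qed
  have PA: "P A = P (A \<inter> G x) + P (A - G x)"
  proof -
    have "A = (A \<inter> G x) \<union> (A - G x)" by blast
    moreover have "(A \<inter> G x) \<inter> (A - G x) = {}" by blast
    ultimately show ?thesis using P_props(3)[OF P A1 A2] by simp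
  qed
  have "(\<Sum>i\<in>insert x I. P (G i \<inter> A)) = P (G x \<inter> A) + (\<Sum>i\<in>I. P (G i \<inter> A))"
    using insert.hyps by simp
  also have "(\<Sum>i\<in>I. P (G i \<inter> A)) = (\<Sum>i\<in>I. P (G i \<inter> (A \<inter> G x))) + (\<Sum>i\<in>I. P (G i \<inter> (A - G x)))"
    using split by (simp add: sum.distrib)
  finally show ?case using h1 h2 PA by (simp add: Int_commute algebra_simps)
qed

lemma stat_shift:
  assumes A: "A \<in> sets (Pi\<^sub>M {0..k} (\<lambda>_. borel))"
  shows "V {\<omega>\<in>\<Omega>. (\<lambda>i\<in>{0..k}. Y (j + 1 + i) \<omega>) \<in> A} = V {\<omega>\<in>\<Omega>. (\<lambda>i\<in>{0..k}. Y (1 + i) \<omega>) \<in> A}"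
proof (induction j)
  case 0 then show ?case by simp
next
  case (Suc j)
  have "V {\<omega>\<in>\<Omega>. (\<lambda>i\<in>{0..k}. Y ((j + 1) + i) \<omega>) \<in> A} = V {\<omega>\<in>\<Omega>. (\<lambda>i\<in>{0..k}. Y ((j + 1) + 1 + i) \<omega>) \<in> A}"
  proof -
    have st: "\<And>n k A. 1 \<le> n \<Longrightarrow> A \<in> sets (Pi\<^sub>M {0..k} (\<lambda>_. borel)) \<Longrightarrow>
        V {\<omega>\<in>\<Omega>. (\<lambda>i\<in>{0..k}. Y (n + i) \<omega>) \<in> A} = V {\<omega>\<in>\<Omega>. (\<lambda>i\<in>{0..k}. Y (n + 1 + i) \<omega>) \<in> A}"
      using stat unfolding stationary_def by blast
    show ?thesis by (rule st[OF _ A]) simp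
  qed
  then show ?case using Suc by (simp add: restrict_def)
qed

end



locale cap2 = cap_setting +
  fixes C :: real
  assumes bddC: "\<forall>n\<ge>1. \<forall>\<omega>\<in>\<Omega>. \<bar>Y n \<omega>\<bar> \<le> C" and C0: "0 \<le> C"
begin

interpretation S: sigma_algebra \<Omega> F by (rule sa)

lemma S_Suc: "S (Suc m) \<omega> = S m \<omega> + Y (Suc m) \<omega>"
  unfolding S_def by simp

lemma S_0: "S 0 \<omega> = 0" unfolding S_def by simp

lemma S_diff: "S (j + n) \<omega> - S j \<omega> = (\<Sum>i<n. Y (j + 1 + i) \<omega>)"
  by (induction n) (auto simp: S_Suc)

lemma S_lt: "S j \<omega> = (\<Sum>i<j. Y (i + 1) \<omega>)"
  using S_diff[of 0 j \<omega>] by (simp add: S_0 add.commute)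

definition Bd :: "real \<Rightarrow> real \<Rightarrow> nat \<Rightarrow> nat \<Rightarrow> 'a set" where
  "Bd s a N j = {\<omega>\<in>\<Omega>. \<forall>n\<in>{1..N}. s * (S (j+n) \<omega> - S j \<omega>) < real n * a}"

lemma Bd_F: "Bd s a N j \<in> F"
proof -
  have "{\<omega>\<in>space M0. \<forall>n\<in>{1..N}. s * (S (j+n) \<omega> - S j \<omega>) < real n * a} \<in> sets M0"
    by measurable
  then show ?thesis unfolding Bd_def space_M0 sets_M0 .
qed

definition Abad :: "real \<Rightarrow> real \<Rightarrow> nat \<Rightarrow> (nat \<Rightarrow> real) set" where
  "Abad s a N = {x \<in> space (Pi\<^sub>M {0..N-1} (\<lambda>_. borel)). \<forall>n\<in>{1..N}. s * (\<Sum>i<n. x i) < real n * a}"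

lemma Abad_sets: "1 \<le> N \<Longrightarrow> Abad s a N \<in> sets (Pi\<^sub>M {0..N-1} (\<lambda>_. borel))"
proof -
  assume N: "1 \<le> N"
  let ?M = "Pi\<^sub>M {0..N-1} (\<lambda>_. borel) :: (nat \<Rightarrow> real) measure"
  have "{x \<in> space ?M. s * (\<Sum>i<n. x i) < real n * a} \<in> sets ?M" if "n \<in> {1..N}" for n
  proof -
    have [measurable]: "(\<lambda>x. \<Sum>i<n. x i) \<in> borel_measurable ?M"
      by (rule borel_measurable_sum) (use that in \<open>auto intro!: measurable_component_singleton\<close>)
    show ?thesis by measurable
  qed
  then show ?thesis unfolding Abad_def by (intro sets.sets_Collect_finite_All) auto
qed

lemma Bd_pre: "1 \<le> N \<Longrightarrow> Bd s a N j = {\<omega>\<in>\<Omega>. (\<lambda>i\<in>{0..N-1}. Y (j + 1 + i) \<omega>) \<in> Abad s a N}"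
proof -
  assume N: "1 \<le> N"
  have eq: "(\<Sum>i<n. (\<lambda>i\<in>{0..N-1}. Y (j+1+i) x) i) = (\<Sum>i<n. Y (j+1+i) x)" if "n \<in> {1..N}" for x n
    using that by (intro sum.cong) auto
  have sp: "(\<lambda>i\<in>{0..N-1}. Y (j + 1 + i) x) \<in> space (Pi\<^sub>M {0..N-1} (\<lambda>_. borel))" for x
    by (simp add: space_PiM)
  show ?thesis unfolding Bd_def Abad_def S_diff using eq sp by auto
qed

lemma V_Bd: "1 \<le> N \<Longrightarrow> V (Bd s a N j) = V (Bd s a N 0)"
  using stat_shift[OF Abad_sets[of N s a], where j=j] Bd_pre[of N s a j] Bd_pre[of N s a 0] by simp

lemma Bd_dec: "decseq (\<lambda>N. Bd s a N j)"
  unfolding decseq_def Bd_def by auto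

lemma Bd_INT: "(\<Inter>N. Bd s a N 0) = {\<omega>\<in>\<Omega>. \<forall>n\<ge>1. s * S n \<omega> < real n * a}"
proof
  show "(\<Inter>N. Bd s a N 0) \<subseteq> {\<omega>\<in>\<Omega>. \<forall>n\<ge>1. s * S n \<omega> < real n * a}"
  proof
    fix x assume h: "x \<in> (\<Inter>N. Bd s a N 0)"
    then have "x \<in> \<Omega>" unfolding Bd_def by auto
    moreover have "s * S n x < real n * a" if "n \<ge> 1" for n
      using h that unfolding Bd_def by (auto simp: S_0 dest!: spec[of _ n])
    ultimately show "x \<in> {\<omega>\<in>\<Omega>. \<forall>n\<ge>1. s * S n \<omega> < real n * a}" by auto
  qed
  show "{\<omega>\<in>\<Omega>. \<forall>n\<ge>1. s * S n \<omega> < real n * a} \<subseteq> (\<Inter>N. Bd s a N 0)"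
    unfolding Bd_def by (auto simp: S_0)
qed

lemma cover_omega:
  assumes \<omega>: "\<omega> \<in> \<Omega>" and s: "\<bar>s\<bar> = 1" and K: "\<bar>a\<bar> + C \<le> K"
  shows "s * S L \<omega> \<ge> a * real L - K * ((\<Sum>i<L. of_bool (\<omega> \<in> Bd s a N i)) + real N)"
proof -
  have "s * S L \<omega> - s * S 0 \<omega> \<ge> a * real (L - 0) - K * ((\<Sum>i\<in>{0..<L}. of_bool (\<omega> \<in> Bd s a N i)) + real N)"
  proof (rule covering[where y="\<lambda>i. s * Y (i+1) \<omega>" and C=C])
    show "s * S j \<omega> = (\<Sum>i<j. s * Y (i + 1) \<omega>)" for j by (simp add: S_lt sum_distrib_left)
    show "\<bar>s * Y (i + 1) \<omega>\<bar> \<le> C" for i using bddC \<omega> s by (simp add: abs_mult)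
    show "\<bar>a\<bar> + C \<le> K" by (rule K)
    show "(\<omega> \<in> Bd s a N j) = (\<not> (\<exists>n\<in>{1..N}. s * S (j + n) \<omega> - s * S j \<omega> \<ge> real n * a))" for j
      unfolding Bd_def using \<omega> by (auto simp: right_diff_distrib not_le)
  qed simp
  then show ?thesis by (simp add: S_0 atLeast0LessThan)
qed

end


context cap2
begin

interpretation S: sigma_algebra \<Omega> F by (rule sa)

lemma Bd_lim0:
  assumes V0: "V (Tl s a) = 0" and a': "a' < a"
  shows "(\<lambda>N. V (Bd s a' N 0)) \<longlonglongrightarrow> 0"
proof -
  obtain j :: nat where j: "1 / (real j + 1) < a - a'"
    using a' by (metis diff_gt_0_iff_gt nat_approx_posE of_nat_Suc add.commute)
  have sub: "(\<Inter>N. Bd s a' N 0) \<subseteq> Tl s a"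
  proof
    fix \<omega> assume "\<omega> \<in> (\<Inter>N. Bd s a' N 0)"
    then have \<omega>: "\<omega> \<in> \<Omega>" "\<forall>n\<ge>1. s * S n \<omega> < real n * a'" unfolding Bd_INT by auto
    have "s * S n \<omega> \<le> real n * (a - 1/(real j + 1))" for n
    proof (cases "n = 0")
      case True then show ?thesis by (simp add: S_0)
    next
      case False
      then have "s * S n \<omega> < real n * a'" using \<omega> by auto
      moreover have "real n * a' \<le> real n * (a - 1/(real j + 1))"
        using j by (intro mult_left_mono) auto
      ultimately show ?thesis by linarith
    qed
    then show "\<omega> \<in> Tl s a" unfolding Tl_def using \<omega> by blast
  qed
  have rF: "range (\<lambda>N. Bd s a' N 0) \<subseteq> F" using Bd_F by auto
  have "V (\<Inter>N. Bd s a' N 0) \<le> V (Tl s a)"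
    by (rule V_mono[OF Tl_F INT_F[OF rF] sub])
  then have "V (\<Inter>N. Bd s a' N 0) = 0" using V0 V_nonneg[OF INT_F[OF rF]] by simp
  then show ?thesis using V_dec[OF rF Bd_dec] by simp
qed

lemma sum_bool_prod:
  fixes f :: "nat \<times> bool \<Rightarrow> real"
  shows "(\<Sum>x\<in>{..<L} \<times> UNIV. f x) = (\<Sum>i<L. f (i, True) + f (i, False))"
proof -
  have "(\<Sum>i<L. f (i, True) + f (i, False)) = (\<Sum>i<L. \<Sum>b\<in>UNIV. f (i, b))"
    by (simp add: UNIV_bool add.commute)
  also have "\<dots> = (\<Sum>x\<in>{..<L} \<times> UNIV. f x)"
    by (simp add: sum.cartesian_product split_def)
  finally show ?thesis by simp
qed

lemma Cov:
  assumes ba: "b < a"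
  shows "V (Tl 1 a) \<noteq> 0 \<or> V (Tl (-1) (-b)) \<noteq> 0"
proof (rule ccontr)
  assume "\<not> ?thesis"
  then have V1: "V (Tl 1 a) = 0" and V2: "V (Tl (-1) (-b)) = 0" by auto
  define a' where "a' = (2*a + b) / 3"
  define b' where "b' = (a + 2*b) / 3"
  define \<delta> where "\<delta> = a' - b'"
  have \<delta>: "0 < \<delta>" unfolding \<delta>_def a'_def b'_def using ba by simp
  define K where "K = \<bar>a'\<bar> + \<bar>b'\<bar> + C + 1"
  have K0: "0 < K" unfolding K_def using C0 by simp
  have l1: "(\<lambda>N. V (Bd 1 a' N 0)) \<longlonglongrightarrow> 0" by (rule Bd_lim0[OF V1]) (simp add: a'_def ba)
  have l2: "(\<lambda>N. V (Bd (-1) (-b') N 0)) \<longlonglongrightarrow> 0" by (rule Bd_lim0[OF V2]) (simp add: b'_def ba)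
  have "(\<lambda>N. V (Bd 1 a' N 0) + V (Bd (-1) (-b') N 0)) \<longlonglongrightarrow> 0"
    using tendsto_add[OF l1 l2] by simp
  moreover have "0 < \<delta> / (2 * K)" using \<delta> K0 by simp
  ultimately obtain N0 where N0: "\<forall>N\<ge>N0. \<bar>V (Bd 1 a' N 0) + V (Bd (-1) (-b') N 0)\<bar> < \<delta> / (2 * K)"
    unfolding LIMSEQ_def dist_real_def by fastforce
  define N where "N = max N0 1"
  have N1: "1 \<le> N" unfolding N_def by simp
  define q where "q = V (Bd 1 a' N 0) + V (Bd (-1) (-b') N 0)"
  have "N \<ge> N0" unfolding N_def by simp
  then have "\<bar>q\<bar> < \<delta> / (2 * K)" using N0 unfolding q_def by blast
  then have q: "q < \<delta> / (2 * K)" by linarith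
  define L where "L = nat \<lceil>4 * K * real N / \<delta>\<rceil> + 1"
  have L: "4 * K * real N / \<delta> < real L"
  proof -
    have "4 * K * real N / \<delta> \<le> real (nat \<lceil>4 * K * real N / \<delta>\<rceil>)" by (rule real_nat_ceiling_ge)
    then show ?thesis unfolding L_def by simp
  qed
  obtain P where P: "P \<in> \<P>" using P_ne by auto
  define G where "G x = (if snd x then Bd 1 a' N (fst x) else Bd (-1) (-b') N (fst x))" for x
  define m where "m = \<delta> * real L / K - 2 * real N"
  have GF: "G x \<in> F" for x unfolding G_def using Bd_F by auto
  have cnt: "\<forall>\<omega>\<in>\<Omega>. (\<Sum>x\<in>{..<L} \<times> UNIV. of_bool (\<omega> \<in> G x)) \<ge> m"
  proof
    fix \<omega> assume \<omega>: "\<omega> \<in> \<Omega>"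
    define c1 where "c1 = (\<Sum>i<L. of_bool (\<omega> \<in> Bd 1 a' N i) :: real)"
    define c2 where "c2 = (\<Sum>i<L. of_bool (\<omega> \<in> Bd (-1) (-b') N i) :: real)"
    have e1: "1 * S L \<omega> \<ge> a' * real L - K * (c1 + real N)"
      unfolding c1_def by (rule cover_omega[OF \<omega>]) (auto simp: K_def)
    have e2: "(-1) * S L \<omega> \<ge> (-b') * real L - K * (c2 + real N)"
      unfolding c2_def by (rule cover_omega[OF \<omega>]) (auto simp: K_def)
    have "\<delta> * real L \<le> K * (c1 + c2 + 2 * real N)"
      using e1 e2 unfolding \<delta>_def by (simp add: algebra_simps)
    then have "m \<le> c1 + c2" unfolding m_def using K0 by (simp add: field_simps)
    moreover have "(\<Sum>x\<in>{..<L} \<times> UNIV. of_bool (\<omega> \<in> G x)) = c1 + c2"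
      unfolding sum_bool_prod c1_def c2_def G_def by (simp add: sum.distrib)
    ultimately show "(\<Sum>x\<in>{..<L} \<times> UNIV. of_bool (\<omega> \<in> G x)) \<ge> m" by simp
  qed
  have low: "(\<Sum>x\<in>{..<L} \<times> UNIV. P (G x \<inter> \<Omega>)) \<ge> m * P \<Omega>"
    by (rule counting[OF P _ GF Om_F cnt]) simp
  have "(\<Sum>x\<in>{..<L} \<times> UNIV. P (G x \<inter> \<Omega>)) = (\<Sum>i<L. P (Bd 1 a' N i) + P (Bd (-1) (-b') N i))"
    unfolding sum_bool_prod G_def using Bd_F Fsub by (simp add: Int_absorb2)
  also have "\<dots> \<le> (\<Sum>i<L. q)"
  proof (rule sum_mono)
    fix i
    have "P (Bd 1 a' N i) \<le> V (Bd 1 a' N i)" "P (Bd (-1) (-b') N i) \<le> V (Bd (-1) (-b') N i)"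
      using P_le_V[OF P Bd_F] by auto
    then show "P (Bd 1 a' N i) + P (Bd (-1) (-b') N i) \<le> q"
      unfolding q_def using V_Bd[OF N1, of 1 a' i] V_Bd[OF N1, of "-1" "-b'" i] by linarith
  qed
  also have "\<dots> = real L * q" by simp
  finally have "m \<le> real L * q" using low P_props(2)[OF P] by simp
  also have "\<dots> \<le> real L * (\<delta> / (2 * K))" using q by (intro mult_left_mono) auto
  finally have "\<delta> * real L / K - 2 * real N \<le> real L * (\<delta> / (2 * K))" unfolding m_def .
  then have "\<delta> * real L \<le> 4 * K * real N" using K0 by (simp add: field_simps)
  moreover have "4 * K * real N < \<delta> * real L" using L \<delta> by (simp add: field_simps)
  ultimately show False by linarith
qed

end


context cap2
begin

interpretation S: sigma_algebra \<Omega> F by (rule sa)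

lemma S_bound: "\<omega> \<in> \<Omega> \<Longrightarrow> \<bar>S n \<omega>\<bar> \<le> real n * C"
proof (induction n)
  case 0 then show ?case by (simp add: S_0)
next
  case (Suc n)
  have "\<bar>Y (Suc n) \<omega>\<bar> \<le> C" using bddC Suc.prems by auto
  then show ?case using Suc by (simp add: S_Suc algebra_simps)
qed

lemma Tl_mono: "a \<le> a' \<Longrightarrow> Tl s a \<subseteq> Tl s a'"
proof
  fix \<omega> assume aa: "a \<le> a'" and "\<omega> \<in> Tl s a"
  then obtain j M where \<omega>: "\<omega> \<in> \<Omega>" "\<forall>n\<ge>M. s * S n \<omega> \<le> real n * (a - 1/(real j + 1))"
    unfolding Tl_def by auto
  have "\<forall>n\<ge>M. s * S n \<omega> \<le> real n * (a' - 1/(real j + 1))"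
  proof (intro allI impI)
    fix n assume "M \<le> n"
    then have "s * S n \<omega> \<le> real n * (a - 1/(real j + 1))" using \<omega> by auto
    moreover have "real n * (a - 1/(real j + 1)) \<le> real n * (a' - 1/(real j + 1))"
      using aa by (intro mult_left_mono) auto
    ultimately show "s * S n \<omega> \<le> real n * (a' - 1/(real j + 1))" by linarith
  qed
  then show "\<omega> \<in> Tl s a'" unfolding Tl_def using \<omega> by blast
qed

lemma Tl_low: "Tl 1 (- C - 1) = {}"
proof -
  have False if "\<omega> \<in> Tl 1 (- C - 1)" for \<omega>
  proof -
    have ex: "\<omega> \<in> \<Omega> \<and> (\<exists>j::nat. \<exists>M::nat. \<forall>n\<ge>M. 1 * S n \<omega> \<le> real n * ((- C - 1) - 1/(real j + 1)))"
      using that unfolding Tl_def by blast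
    then obtain j M where \<omega>: "\<omega> \<in> \<Omega>" "\<forall>n\<ge>M. S n \<omega> \<le> real n * ((- C - 1) - 1/(real j + 1))"
      by auto
    define n where "n = max M 1"
    have "S n \<omega> \<le> real n * ((- C - 1) - 1/(real j + 1))" using \<omega> unfolding n_def by auto
    moreover have "- (real n * C) \<le> S n \<omega>" using S_bound[OF \<omega>(1), of n] by linarith
    moreover have "real n \<ge> 1" unfolding n_def by simp
    moreover have "0 < 1/(real j + 1)" by simp
    moreover have "real n * ((- C - 1) - 1/(real j + 1)) = - (real n * C) - real n - real n * (1/(real j + 1))"
      by (simp add: algebra_simps)
    moreover have "0 \<le> real n * (1/(real j + 1))" by simp
    ultimately show False by linarith
  qed
  then show ?thesis by blast
qed

lemma Tl_high: "C < a \<Longrightarrow> Tl 1 a = \<Omega>"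
proof -
  assume Ca: "C < a"
  obtain j :: nat where j: "1 / (real j + 1) < a - C"
    using Ca by (metis diff_gt_0_iff_gt nat_approx_posE of_nat_Suc add.commute)
  have "\<omega> \<in> Tl 1 a" if "\<omega> \<in> \<Omega>" for \<omega>
  proof -
    have "1 * S n \<omega> \<le> real n * (a - 1/(real j + 1))" for n
    proof -
      have "S n \<omega> \<le> real n * C" using S_bound[OF that, of n] by linarith
      moreover have "real n * C \<le> real n * (a - 1/(real j + 1))" using j by (intro mult_left_mono) auto
      ultimately show ?thesis by simp
    qed
    then show ?thesis unfolding Tl_def using that by blast
  qed
  then show ?thesis unfolding Tl_def by blast
qed

definition u :: real where "u = Sup {a. V (Tl 1 a) = 0}"

lemma u_set_ne: "- C - 1 \<in> {a. V (Tl 1 a) = 0}"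
  using Tl_low V_empty by simp

lemma u_set_bdd: "bdd_above {a. V (Tl 1 a) = 0}"
proof (rule bdd_aboveI[where M=C])
  fix x assume "x \<in> {a. V (Tl 1 a) = 0}"
  then show "x \<le> C" using Tl_high[of x] V_Om by (cases "C < x") auto
qed

lemma above_u: "u < a \<Longrightarrow> V (Tl 1 a) = 1"
proof -
  assume "u < a"
  then have "V (Tl 1 a) \<noteq> 0"
    using cSup_upper[OF _ u_set_bdd, of a] unfolding u_def by force
  then show ?thesis using Tl_01 by blast
qed

lemma below_u: "b < u \<Longrightarrow> V (Tl (-1) (-b)) = 1"
proof -
  assume bu: "b < u"
  define a where "a = (b + u) / 2"
  have "a < u" "b < a" using bu unfolding a_def by auto
  then obtain x where x: "V (Tl 1 x) = 0" "a < x"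
    using less_cSup_iff[OF _ u_set_bdd] u_set_ne unfolding u_def by blast
  have "V (Tl 1 a) \<le> V (Tl 1 x)" using Tl_mono[of a x] x(2) by (intro V_mono Tl_F) auto
  then have "V (Tl 1 a) = 0" using x(1) V_nonneg[OF Tl_F] by (simp add: order_antisym)
  then have "V (Tl (-1) (-b)) \<noteq> 0" using Cov[OF \<open>b < a\<close>] by blast
  then show ?thesis using Tl_01 by blast
qed

definition T1 :: "nat \<Rightarrow> 'a set" where "T1 k = Tl 1 (u + 1/(real k + 1))"
definition T2 :: "nat \<Rightarrow> 'a set" where "T2 k = Tl (-1) (- (u - 1/(real k + 1)))"

definition Lc :: "'a set" where
  "Lc = {\<omega>\<in>\<Omega>. (\<lambda>n. (\<Sum>k=1..n. Y k \<omega>) / real n) \<longlonglongrightarrow> u}"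

lemma Lc_eq: "Lc = (\<Inter>k. T1 k \<inter> T2 k)"
proof
  show "(\<Inter>k. T1 k \<inter> T2 k) \<subseteq> Lc"
  proof
    fix \<omega> assume h: "\<omega> \<in> (\<Inter>k. T1 k \<inter> T2 k)"
    then have \<omega>: "\<omega> \<in> \<Omega>" unfolding T1_def Tl_def by auto
    have "(\<lambda>n. S n \<omega> / real n) \<longlonglongrightarrow> u"
    proof (rule LIMSEQ_I)
      fix r :: real assume r: "0 < r"
      obtain k :: nat where k: "1 / (real k + 1) < r"
        using r by (metis nat_approx_posE of_nat_Suc add.commute)
      obtain j M where jM: "\<forall>n\<ge>M. 1 * S n \<omega> \<le> real n * ((u + 1/(real k + 1)) - 1/(real j + 1))"
        using h unfolding T1_def Tl_def by blast
      obtain j' M' where jM': "\<forall>n\<ge>M'. (-1) * S n \<omega> \<le> real n * (- (u - 1/(real k + 1)) - 1/(real j' + 1))"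
        using h unfolding T2_def Tl_def by blast
      have "norm (S n \<omega> / real n - u) < r" if n: "n \<ge> max (max M M') 1" for n
      proof -
        have n1: "real n \<ge> 1" using n by simp
        have "S n \<omega> \<le> real n * (u + 1/(real k + 1))"
        proof -
          have "S n \<omega> \<le> real n * ((u + 1/(real k + 1)) - 1/(real j + 1))" using jM n by auto
          moreover have "real n * ((u + 1/(real k + 1)) - 1/(real j + 1)) \<le> real n * (u + 1/(real k + 1))"
            by (intro mult_left_mono) auto
          ultimately show ?thesis by linarith
        qed
        moreover have "S n \<omega> \<ge> real n * (u - 1/(real k + 1))"
        proof -
          have "- S n \<omega> \<le> real n * (- (u - 1/(real k + 1)) - 1/(real j' + 1))" using jM' n by auto
          moreover have "real n * (- (u - 1/(real k + 1)) - 1/(real j' + 1)) \<le> real n * (- (u - 1/(real k + 1)))"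
            by (intro mult_left_mono) auto
          ultimately show ?thesis by linarith
        qed
        ultimately have "S n \<omega> / real n \<le> u + 1/(real k + 1)" "u - 1/(real k + 1) \<le> S n \<omega> / real n"
          using n1 by (subst pos_divide_le_eq pos_le_divide_eq; simp add: mult.commute)+
        then have "\<bar>S n \<omega> / real n - u\<bar> \<le> 1/(real k + 1)"
          by (simp add: abs_le_iff)
        then show ?thesis using k by simp
      qed
      then show "\<exists>no. \<forall>n\<ge>no. norm (S n \<omega> / real n - u) < r" by blast
    qed
    then show "\<omega> \<in> Lc" unfolding Lc_def S_def using \<omega> by simp
  qed
  show "Lc \<subseteq> (\<Inter>k. T1 k \<inter> T2 k)"
  proof
    fix \<omega> assume "\<omega> \<in> Lc"
    then have \<omega>: "\<omega> \<in> \<Omega>" and lim: "(\<lambda>n. S n \<omega> / real n) \<longlonglongrightarrow> u"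
      unfolding Lc_def S_def by auto
    have "\<omega> \<in> T1 k \<inter> T2 k" for k
    proof -
      define r where "r = 1 / (2 * (real k + 1))"
      have r0: "0 < r" unfolding r_def by simp
      obtain M where M: "\<forall>n\<ge>M. norm (S n \<omega> / real n - u) < r"
        using LIMSEQ_D[OF lim r0] by blast
      have jr: "1 / (real (2*k+1) + 1) = r" unfolding r_def by simp
      have kr: "1 / (real k + 1) = 2 * r" unfolding r_def by (simp add: field_simps)
      have b1: "S n \<omega> \<le> real n * (u + 1/(real k + 1) - 1/(real (2*k+1) + 1))"
        and b2: "- S n \<omega> \<le> real n * (- (u - 1/(real k + 1)) - 1/(real (2*k+1) + 1))" if n: "n \<ge> max M 1" for n
      proof -
        have n1: "real n \<ge> 1" using n by simp
        have "\<bar>S n \<omega> / real n - u\<bar> < r" using M n by auto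
        then have "\<bar>S n \<omega> - real n * u\<bar> < real n * r" using n1
          by (smt (verit, ccfv_SIG) diff_divide_distrib divide_less_eq mult.commute nonzero_mult_div_cancel_left abs_divide abs_of_pos)
        then show "S n \<omega> \<le> real n * (u + 1/(real k + 1) - 1/(real (2*k+1) + 1))"
          and "- S n \<omega> \<le> real n * (- (u - 1/(real k + 1)) - 1/(real (2*k+1) + 1))"
          unfolding jr kr by (auto simp: algebra_simps abs_less_iff)
      qed
      have "\<omega> \<in> T1 k" unfolding T1_def Tl_def using \<omega> b1 by (intro CollectI conjI exI[of _ "2*k+1"] exI[of _ "max M 1"]) auto
      moreover have "\<omega> \<in> T2 k" unfolding T2_def Tl_def using \<omega> b2 by (intro CollectI conjI exI[of _ "2*k+1"] exI[of _ "max M 1"]) auto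
      ultimately show ?thesis by blast
    qed
    then show "\<omega> \<in> (\<Inter>k. T1 k \<inter> T2 k)" by blast
  qed
qed

lemma Lc_F: "Lc \<in> F"
  unfolding Lc_eq T1_def T2_def by (intro INT_F) (auto intro: Int_F Tl_F)

lemma V_not_Lc: "V (\<Omega> - Lc) = 0"
proof -
  have eq: "\<Omega> - Lc = (\<Union>k. (\<Omega> - T1 k) \<union> (\<Omega> - T2 k))" unfolding Lc_eq by blast
  have F1: "\<Omega> - T1 k \<in> F" "\<Omega> - T2 k \<in> F" for k unfolding T1_def T2_def by (auto intro: diff_F Om_F Tl_F)
  have z1: "V (\<Omega> - T1 k) = 0" for k
    unfolding T1_def by (rule Tl_1_compl[OF above_u]) simp
  have z2: "V (\<Omega> - T2 k) = 0" for k
    unfolding T2_def by (rule Tl_1_compl[OF below_u]) simp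
  have "V ((\<Omega> - T1 k) \<union> (\<Omega> - T2 k)) = 0" for k
    using V_union_le[OF F1] z1 z2 V_nonneg[OF Un_F[OF F1]] by (metis add.right_neutral order_antisym)
  then show ?thesis unfolding eq by (intro V_null_UN) (auto intro: Un_F F1)
qed

lemma P_Lc: "P \<in> \<P> \<Longrightarrow> P Lc = 1"
proof -
  assume P: "P \<in> \<P>"
  have "P (\<Omega> - Lc) \<le> 0" using P_le_V[OF P diff_F[OF Om_F Lc_F]] V_not_Lc by simp
  moreover have "0 \<le> P (\<Omega> - Lc)" using P_props(1)[OF P diff_F[OF Om_F Lc_F]] .
  ultimately show ?thesis using P_compl[OF P Lc_F] by simp
qed

lemma lower_Lc: "lower_prob \<P> Lc = 1"
proof -
  have "lower_prob \<P> Lc = (INF P\<in>\<P>. (1::real))"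
    unfolding lower_prob_def using P_Lc by (intro INF_cong) auto
  also have "\<dots> = 1" using P_ne by simp
  finally show ?thesis .
qed

end


locale antig =
  fixes g :: "real \<Rightarrow> real" and C :: real
  assumes anti: "\<And>s t. s \<le> t \<Longrightarrow> g t \<le> g s"
    and g1: "\<And>t. t \<le> - C \<Longrightarrow> g t = 1"
    and g0: "\<And>t. C < t \<Longrightarrow> g t = 0"
    and Cpos: "0 < C"
begin

lemma g_le1: "g t \<le> 1"
  using anti[of "min t (-C)" t] g1[of "min t (-C)"] by simp

lemma g_ge0: "0 \<le> g t"
  using anti[of t "max t (C+1)"] g0[of "max t (C+1)"] by simp

lemma g_meas[measurable]: "g \<in> borel_measurable borel"
proof -
  have "mono (\<lambda>t. - g t)" unfolding mono_def using anti by simp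
  then have "(\<lambda>t. - g t) \<in> borel_measurable borel" by (rule borel_measurable_mono)
  then have "(\<lambda>t. - (- g t)) \<in> borel_measurable borel" by measurable
  then show ?thesis by simp
qed

lemma g_meas_lborel[measurable]: "g \<in> borel_measurable lborel"
  using g_meas by simp

lemma emeas_Ioc: "emeasure lborel {a<..b::real} < \<infinity>"
proof (cases "a \<le> b")
  case True then show ?thesis by (simp add: emeasure_lborel_Ioc)
next
  case False then have "{a<..b} = {}" by auto
  then show ?thesis by simp
qed

lemma si_const: "set_integrable lborel {a<..b::real} (\<lambda>_. c::real)"
proof -
  have m: "{a<..b} \<in> sets lborel" using greaterThanAtMost_borel by simp
  show ?thesis unfolding set_integrable_def
    using Bochner_Integration.integrable_indicator[OF m emeas_Ioc, of c] by simp
qed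

lemma int_const: "a \<le> b \<Longrightarrow> (LINT x:{a<..b}|lborel. (c::real)) = (b - a) * c"
  by (subst set_integral_const) (auto simp: emeasure_lborel_Ioc)

lemma si_g: "set_integrable lborel {a<..b::real} g"
proof (rule set_integrable_bound[OF si_const[of a b 1]])
  show "set_borel_measurable lborel {a<..b} g" unfolding set_borel_measurable_def by measurable
  show "AE x in lborel. x \<in> {a<..b} \<longrightarrow> norm (g x) \<le> norm (1::real)"
    using g_le1 g_ge0 by auto
qed

definition J :: "real \<Rightarrow> real \<Rightarrow> real" where "J a b = (LINT x:{a<..b}|lborel. g x)"

lemma J_bounds:
  assumes "a \<le> b"
  shows "(b - a) * g b \<le> J a b" "J a b \<le> (b - a) * g a"
proof -
  have "(LINT x:{a<..b}|lborel. g b) \<le> J a b" unfolding J_def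
    by (rule set_integral_mono[OF si_const si_g]) (auto intro: anti)
  then show "(b - a) * g b \<le> J a b" using int_const[OF assms] by simp
  have "J a b \<le> (LINT x:{a<..b}|lborel. g a)" unfolding J_def
    by (rule set_integral_mono[OF si_g si_const]) (auto intro: anti)
  then show "J a b \<le> (b - a) * g a" using int_const[OF assms] by simp
qed

lemma J_add: "a \<le> b \<Longrightarrow> b \<le> c \<Longrightarrow> J a c = J a b + J b c"
proof -
  assume "a \<le> b" "b \<le> c"
  then have "{a<..c} = {a<..b} \<union> {b<..c}" by auto
  moreover have "{a<..b} \<inter> {b<..c} = {}" by auto
  ultimately show ?thesis unfolding J_def using set_integral_Un[OF _ si_g si_g] by simp
qed

lemma J_sum:
  assumes d: "0 \<le> d"
  shows "d * (\<Sum>i\<in>{1..n}. g (a + real i * d)) \<le> J a (a + real n * d)"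
    "J a (a + real n * d) \<le> d * (\<Sum>i\<in>{1..n}. g (a + real (i - 1) * d))"
proof (induction n)
  case 0
  { case 1 show ?case by (simp add: J_def set_lebesgue_integral_def) }
  { case 2 show ?case by (simp add: J_def set_lebesgue_integral_def) }
next
  case (Suc n)
  have le1: "a + real n * d \<le> a + real (Suc n) * d" using d by (simp add: algebra_simps)
  have le0: "a \<le> a + real n * d" using d by simp
  have add: "J a (a + real (Suc n) * d) = J a (a + real n * d) + J (a + real n * d) (a + real (Suc n) * d)"
    by (rule J_add[OF le0 le1])
  have diff: "(a + real (Suc n) * d) - (a + real n * d) = d" by (simp add: algebra_simps)
  note b = J_bounds[OF le1, unfolded diff]
  { case 1 show ?case using Suc.IH(1) b(1) add by (simp add: distrib_left) }
  { case 2 show ?case using Suc.IH(2) b(2) add by (simp add: distrib_left) }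
qed

definition I :: real where
  "I = (LINT t:{0..}|lborel. g t) + (LINT t:{..<0}|lborel. (g t - 1))"

lemma I_eq: "I = J (- C) C - C"
proof -
  have sb: "set_borel_measurable lborel A g" if A[measurable]: "A \<in> sets borel" for A
    unfolding set_borel_measurable_def by measurable
  have sb1: "set_borel_measurable lborel A (\<lambda>t. g t - 1)" if A[measurable]: "A \<in> sets borel" for A
    unfolding set_borel_measurable_def by measurable
  have p1: "(LINT t:{0..}|lborel. g t) = (LINT t:{0<..}|lborel. g t)"
    by (rule set_integral_cong_set[OF sb sb, OF _ _]) (use AE_lborel_singleton[of "0::real"] in \<open>auto\<close>)
  have siC: "set_integrable lborel {C<..} g"
  proof (rule set_integrable_bound[where f="\<lambda>_. 0::real"])
    show "set_integrable lborel {C<..} (\<lambda>_. 0::real)" by (simp add: set_integrable_def)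
    show "set_borel_measurable lborel {C<..} g" by (rule sb) simp
    show "AE x in lborel. x \<in> {C<..} \<longrightarrow> norm (g x) \<le> norm (0::real)" using g0 by auto
  qed
  have "{0<..} = {0<..C} \<union> {C<..}" using Cpos by auto
  moreover have "{0<..C} \<inter> {C<..} = {}" by auto
  ultimately have "(LINT t:{0<..}|lborel. g t) = J 0 C + (LINT t:{C<..}|lborel. g t)"
    unfolding J_def by (simp add: set_integral_Un[OF _ si_g siC])
  moreover have "(LINT t:{C<..}|lborel. g t) = (LINT t:{C<..}|lborel. 0)"
    by (rule set_lebesgue_integral_cong) (auto simp: g0)
  ultimately have pos: "(LINT t:{0..}|lborel. g t) = J 0 C" using p1 by (simp add: set_lebesgue_integral_def)
  have n1: "(LINT t:{..<0}|lborel. g t - 1) = (LINT t:{..0}|lborel. g t - 1)"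
    by (rule set_integral_cong_set[OF sb1 sb1, OF _ _]) (use AE_lborel_singleton[of "0::real"] in \<open>auto\<close>)
  have siL: "set_integrable lborel {..-C} (\<lambda>t. g t - 1)"
  proof (rule set_integrable_bound[where f="\<lambda>_. 0::real"])
    show "set_integrable lborel {..-C} (\<lambda>_. 0::real)" by (simp add: set_integrable_def)
    show "set_borel_measurable lborel {..-C} (\<lambda>t. g t - 1)" by (rule sb1) simp
    show "AE x in lborel. x \<in> {..-C} \<longrightarrow> norm (g x - 1) \<le> norm (0::real)" using g1 by auto
  qed
  have siM: "set_integrable lborel {-C<..0} (\<lambda>t. g t - 1)"
    using set_integral_diff(1)[OF si_g si_const] .
  have "{..0} = {..-C} \<union> {-C<..0}" using Cpos by auto
  moreover have "{..-C} \<inter> {-C<..0} = {}" by auto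
  ultimately have "(LINT t:{..0}|lborel. g t - 1) = (LINT t:{..-C}|lborel. g t - 1) + (LINT t:{-C<..0}|lborel. g t - 1)"
    by (simp add: set_integral_Un[OF _ siL siM])
  moreover have "(LINT t:{..-C}|lborel. g t - 1) = (LINT t:{..-C}|lborel. 0)"
    by (rule set_lebesgue_integral_cong) (auto simp: g1)
  moreover have "(LINT t:{-C<..0}|lborel. g t - 1) = J (-C) 0 - C"
    unfolding J_def using set_integral_diff(2)[OF si_g si_const, of "-C" 0 1] Cpos int_const[of "-C" 0 1]
    by simp
  ultimately have neg: "(LINT t:{..<0}|lborel. g t - 1) = J (-C) 0 - C"
    using n1 by (simp add: set_lebesgue_integral_def)
  have "J (-C) C = J (-C) 0 + J 0 C" using Cpos by (intro J_add) auto
  then show ?thesis unfolding I_def using pos neg by simp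
qed

lemma I_sandwich:
  assumes p: "1 \<le> p"
  shows "- C + (C / real p) * (\<Sum>i\<in>{1..2*p}. g (- C + real i * (C / real p))) \<le> I"
    "I \<le> - C + (C / real p) * (\<Sum>i\<in>{1..2*p}. g (- C + real (i - 1) * (C / real p)))"
proof -
  have d: "0 \<le> C / real p" using Cpos by simp
  have e: "- C + real (2*p) * (C / real p) = C" using p by (simp add: field_simps)
  show "- C + (C / real p) * (\<Sum>i\<in>{1..2*p}. g (- C + real i * (C / real p))) \<le> I"
    using J_sum(1)[OF d, where n="2*p" and a="-C"] I_eq e by simp
  show "I \<le> - C + (C / real p) * (\<Sum>i\<in>{1..2*p}. g (- C + real (i - 1) * (C / real p)))"
    using J_sum(2)[OF d, where n="2*p" and a="-C"] I_eq e by simp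
qed

end


lemma grid_low:
  fixes y C :: real
  assumes C: "0 < C" and m: "1 \<le> m" and y: "\<bar>y\<bar> \<le> C"
  shows "- C + (2*C/real m) * (\<Sum>i\<in>{1..m}. of_bool (- C + real i * (2*C/real m) \<le> y)) \<le> y"
proof -
  define d where "d = 2*C/real m"
  have d: "0 < d" unfolding d_def using C m by simp
  define q where "q = nat \<lfloor>(y + C)/d\<rfloor>"
  have sub: "{i\<in>{1..m}. - C + real i * d \<le> y} \<subseteq> {1..q}"
  proof
    fix i assume i: "i \<in> {i\<in>{1..m}. - C + real i * d \<le> y}"
    then have "real i * d \<le> y + C" by simp
    then have "real i \<le> (y + C) / d" using d by (simp add: field_simps)
    then have "i \<le> q" unfolding q_def by (rule le_nat_floor)
    then show "i \<in> {1..q}" using i by auto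
  qed
  have "(\<Sum>i\<in>{1..m}. of_bool (- C + real i * d \<le> y) :: real) = real (card {i\<in>{1..m}. - C + real i * d \<le> y})"
    by (subst sum_of_bool_eq) (auto intro!: arg_cong[where f=card])
  also have "\<dots> \<le> real q" using card_mono[OF _ sub] by simp
  also have "real q \<le> (y + C) / d"
  proof -
    have "0 \<le> (y + C) / d" using y d by (simp add: abs_le_iff)
    then show ?thesis unfolding q_def by simp
  qed
  finally have "d * (\<Sum>i\<in>{1..m}. of_bool (- C + real i * d \<le> y)) \<le> y + C"
    using d by (simp add: field_simps)
  then show ?thesis unfolding d_def by simp
qed

lemma grid_up:
  fixes y C :: real
  assumes C: "0 < C" and m: "1 \<le> m" and y: "\<bar>y\<bar> \<le> C"
  shows "y \<le> - C + (2*C/real m) * (\<Sum>i<m. of_bool (- C + real i * (2*C/real m) \<le> y))"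
proof -
  define d where "d = 2*C/real m"
  have d: "0 < d" unfolding d_def using C m by simp
  have dm: "d * real m = 2 * C" unfolding d_def using m by simp
  have yC: "0 \<le> (y + C) / d" using y d by (simp add: abs_le_iff)
  define q where "q = nat \<lfloor>(y + C)/d\<rfloor>"
  have qle: "real q \<le> (y + C) / d" unfolding q_def using yC by simp
  have qgt: "(y + C) / d < real q + 1" unfolding q_def using yC by linarith
  have sub: "{i\<in>{..<m}. i \<le> q} \<subseteq> {i\<in>{..<m}. - C + real i * d \<le> y}"
  proof
    fix i assume i: "i \<in> {i\<in>{..<m}. i \<le> q}"
    then have "real i \<le> real q" by simp
    then have "real i \<le> (y + C) / d" using qle by linarith
    then have "real i * d \<le> y + C" using d by (simp add: field_simps)
    then show "i \<in> {i\<in>{..<m}. - C + real i * d \<le> y}" using i by auto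
  qed
  have eq: "(\<Sum>i<m. of_bool (- C + real i * d \<le> y) :: real) = real (card {i\<in>{..<m}. - C + real i * d \<le> y})"
    by (subst sum_of_bool_eq) (auto intro!: arg_cong[where f=card])
  have "y + C \<le> d * real (card {i\<in>{..<m}. - C + real i * d \<le> y})"
  proof (cases "q < m")
    case True
    then have eqs: "{i\<in>{..<m}. i \<le> q} = {..q}" by auto
    have c: "card {i\<in>{..<m}. i \<le> q} \<le> card {i\<in>{..<m}. - C + real i * d \<le> y}"
      by (rule card_mono[OF _ sub]) simp
    then have "q + 1 \<le> card {i\<in>{..<m}. - C + real i * d \<le> y}"
      unfolding eqs card_atMost by simp
    then have r: "real (q + 1) \<le> real (card {i\<in>{..<m}. - C + real i * d \<le> y})"
      by (simp only: of_nat_le_iff)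
    have y1: "y + C < d * (real q + 1)" using qgt d by (simp add: field_simps)
    have "d * real (q + 1) \<le> d * real (card {i\<in>{..<m}. - C + real i * d \<le> y})"
      using r d by (intro mult_left_mono) auto
    then show ?thesis using y1 by (simp add: add.commute)
  next
    case False
    then have eqs: "{i\<in>{..<m}. i \<le> q} = {..<m}" by auto
    have c: "card {i\<in>{..<m}. i \<le> q} \<le> card {i\<in>{..<m}. - C + real i * d \<le> y}"
      by (rule card_mono[OF _ sub]) simp
    then have "m \<le> card {i\<in>{..<m}. - C + real i * d \<le> y}"
      unfolding eqs card_lessThan by simp
    then have "real m \<le> real (card {i\<in>{..<m}. - C + real i * d \<le> y})"
      by (simp only: of_nat_le_iff)
    then have "d * real m \<le> d * real (card {i\<in>{..<m}. - C + real i * d \<le> y})"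
      using d by (intro mult_left_mono) auto
    then show ?thesis using dm y by (simp add: abs_le_iff)
  qed
  then have "y + C \<le> d * (\<Sum>i<m. of_bool (- C + real i * d \<le> y))" by (simp only: eq)
  then show ?thesis unfolding d_def by linarith
qed

lemma lim_bound:
  fixes X K :: real and \<eta> :: "nat \<Rightarrow> real"
  assumes h: "\<And>n. 1 \<le> n \<Longrightarrow> K * (1 - \<eta> n) \<le> X" and l: "\<eta> \<longlonglongrightarrow> 0"
  shows "K \<le> X"
proof -
  have "(\<lambda>n. K * (1 - \<eta> n)) \<longlonglongrightarrow> K * (1 - 0)" by (intro tendsto_intros l)
  then have lim: "(\<lambda>n. K * (1 - \<eta> n)) \<longlonglongrightarrow> K" by simp
  show ?thesis
  proof (rule LIMSEQ_le_const2[OF lim])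
    show "\<exists>N. \<forall>n\<ge>N. K * (1 - \<eta> n) \<le> X" using h by (intro exI[of _ 1]) auto
  qed
qed

lemma sum_prod_snd:
  fixes f :: "nat \<Rightarrow> real"
  shows "(\<Sum>x\<in>{1..n} \<times> B. f (snd x)) = real n * (\<Sum>i\<in>B. f i)"
proof -
  have "(\<Sum>k\<in>{1..n}. \<Sum>i\<in>B. f i) = (\<Sum>(k,i)\<in>{1..n} \<times> B. f i)"
    by (rule sum.cartesian_product)
  then have "(\<Sum>x\<in>{1..n} \<times> B. f (snd x)) = (\<Sum>k\<in>{1..n}. \<Sum>i\<in>B. f i)"
    by (simp add: split_def)
  then show ?thesis by simp
qed

lemma sum_prod_split:
  fixes f :: "nat \<Rightarrow> nat \<Rightarrow> real"
  shows "(\<Sum>x\<in>{1..n} \<times> B. f (fst x) (snd x)) = (\<Sum>k\<in>{1..n}. \<Sum>i\<in>B. f k i)"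
proof -
  have "(\<Sum>k\<in>{1..n}. \<Sum>i\<in>B. f k i) = (\<Sum>(k,i)\<in>{1..n} \<times> B. f k i)"
    by (rule sum.cartesian_product)
  then show ?thesis by (simp add: split_def)
qed

context cap2
begin

interpretation S: sigma_algebra \<Omega> F by (rule sa)

lemma v_eq: assumes A: "A \<in> F" shows "lower_prob \<P> A = 1 - V (\<Omega> - A)"
proof (rule antisym)
  have AF: "\<Omega> - A \<in> F" using A by (intro diff_F Om_F)
  have bb: "bdd_below ((\<lambda>P. P A) ` \<P>)"
    by (rule bdd_belowI[where m=0]) (use A P_props(1) in auto)
  have "P (\<Omega> - A) \<le> 1 - lower_prob \<P> A" if P: "P \<in> \<P>" for P
  proof -
    have "lower_prob \<P> A \<le> P A" unfolding lower_prob_def by (rule cINF_lower[OF bb P])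
    then show ?thesis using P_compl[OF P A] by simp
  qed
  then have "V (\<Omega> - A) \<le> 1 - lower_prob \<P> A" by (rule V_le[OF AF])
  then show "lower_prob \<P> A \<le> 1 - V (\<Omega> - A)" by simp
  show "1 - V (\<Omega> - A) \<le> lower_prob \<P> A"
    unfolding lower_prob_def
  proof (rule cINF_greatest[OF P_ne])
    fix P assume P: "P \<in> \<P>"
    show "1 - V (\<Omega> - A) \<le> P A" using P_le_V[OF P AF] P_compl[OF P A] by simp
  qed
qed

lemma stat1:
  assumes B: "B \<in> sets borel"
  shows "V {\<omega>\<in>\<Omega>. Y (j + 1) \<omega> \<in> B} = V {\<omega>\<in>\<Omega>. Y 1 \<omega> \<in> B}"
proof -
  define A where "A = {x \<in> space (Pi\<^sub>M {0..0} (\<lambda>_. borel)). (x (0::nat) :: real) \<in> B}"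
  have A: "A \<in> sets (Pi\<^sub>M {0..0} (\<lambda>_. borel))"
  proof -
    have [measurable]: "(\<lambda>x. x (0::nat)) \<in> borel_measurable (Pi\<^sub>M {0..0::nat} (\<lambda>_. borel :: real measure))"
      by (rule measurable_component_singleton) simp
    have [measurable]: "B \<in> sets borel" by (rule B)
    show ?thesis unfolding A_def by measurable
  qed
  have e: "{\<omega>\<in>\<Omega>. (\<lambda>i\<in>{0..0}. Y (j + 1 + i) \<omega>) \<in> A} = {\<omega>\<in>\<Omega>. Y (j + 1) \<omega> \<in> B}" for j
    unfolding A_def by (auto simp: space_PiM)
  show ?thesis using stat_shift[OF A, of j] e[of j] e[of 0] by simp
qed

lemma count_bound:
  assumes P: "P \<in> \<P>" and fin: "finite I" and G: "\<And>x. x \<in> I \<Longrightarrow> G x \<in> F" and A: "A \<in> F"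
    and cnt: "\<forall>\<omega>\<in>A. (\<Sum>x\<in>I. of_bool (\<omega> \<in> G x)) \<ge> m" and m: "0 \<le> m"
    and w: "\<And>x. x \<in> I \<Longrightarrow> V (G x) \<le> w x"
  shows "m * (1 - V (\<Omega> - A)) \<le> (\<Sum>x\<in>I. w x)"
proof -
  have "m * P A \<le> (\<Sum>x\<in>I. P (G x \<inter> A))" by (rule counting[OF P fin G A cnt])
  also have "\<dots> \<le> (\<Sum>x\<in>I. w x)"
  proof (rule sum_mono)
    fix x assume x: "x \<in> I"
    have "P (G x \<inter> A) \<le> P (G x)" using P_mono[OF P G[OF x] Int_F[OF G[OF x] A]] by auto
    also have "\<dots> \<le> V (G x)" by (rule P_le_V[OF P G[OF x]])
    finally show "P (G x \<inter> A) \<le> w x" using w[OF x] by linarith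
  qed
  finally have "m * P A \<le> (\<Sum>x\<in>I. w x)" .
  moreover have "1 - V (\<Omega> - A) \<le> P A"
    using P_compl[OF P A] P_le_V[OF P diff_F[OF Om_F A]] by simp
  ultimately have "m * (1 - V (\<Omega> - A)) \<le> m * P A" using m by (intro mult_left_mono) auto
  then show ?thesis using \<open>m * P A \<le> (\<Sum>x\<in>I. w x)\<close> by linarith
qed

lemma V_to0:
  assumes E: "\<And>n. E n \<in> F" and sub: "(\<Inter>M. \<Union>n\<in>{M..}. E n) \<subseteq> \<Omega> - Lc"
  shows "(\<lambda>n. V (E n)) \<longlonglongrightarrow> 0"
proof -
  define B where "B M = (\<Union>n\<in>{M..}. E n)" for M
  have BF: "range B \<subseteq> F" unfolding B_def using E by (auto intro!: S.countable_UN')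
  have dec: "decseq B" unfolding B_def decseq_def by (intro allI impI UN_mono) auto
  have "V (\<Inter>M. B M) \<le> V (\<Omega> - Lc)"
    using V_mono[OF diff_F[OF Om_F Lc_F] INT_F[OF BF]] sub unfolding B_def by auto
  then have "V (\<Inter>M. B M) = 0" using V_not_Lc V_nonneg[OF INT_F[OF BF]] by simp
  then have lB: "(\<lambda>M. V (B M)) \<longlonglongrightarrow> 0" using V_dec[OF BF dec] by simp
  show ?thesis
  proof (rule tendsto_sandwich[OF _ _ tendsto_const lB])
    show "\<forall>\<^sub>F n in sequentially. 0 \<le> V (E n)" using V_nonneg E by simp
    show "\<forall>\<^sub>F n in sequentially. V (E n) \<le> V (B n)"
    proof (rule always_eventually, intro allI)
      fix n
      have "B n \<in> F" using BF by auto
      moreover have "E n \<subseteq> B n" unfolding B_def by auto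
      ultimately show "V (E n) \<le> V (B n)" using V_mono[of "B n" "E n"] E by auto
    qed
  qed
qed

end


context cap2
begin

interpretation S: sigma_algebra \<Omega> F by (rule sa)

lemma Gt_F: "{\<omega>\<in>\<Omega>. t \<le> Y k \<omega>} \<in> F" if "1 \<le> k"
proof -
  have "Y k -` {t..} \<inter> \<Omega> \<in> F" using meas that by simp
  moreover have "Y k -` {t..} \<inter> \<Omega> = {\<omega>\<in>\<Omega>. t \<le> Y k \<omega>}" by auto
  ultimately show ?thesis by simp
qed

lemma Lt_F: "{\<omega>\<in>\<Omega>. Y k \<omega> < t} \<in> F" if "1 \<le> k"
proof -
  have "Y k -` {..<t} \<inter> \<Omega> \<in> F" using meas that by simp
  moreover have "Y k -` {..<t} \<inter> \<Omega> = {\<omega>\<in>\<Omega>. Y k \<omega> < t}" by auto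
  ultimately show ?thesis by simp
qed

lemma SA_F: "{\<omega>\<in>\<Omega>. x \<le> S n \<omega>} \<in> F" "{\<omega>\<in>\<Omega>. S n \<omega> \<le> x} \<in> F"
proof -
  have c: "(\<lambda>_. x) \<in> borel_measurable M0" by simp
  show "{\<omega>\<in>\<Omega>. x \<le> S n \<omega>} \<in> F" using borel_measurable_le[OF c S_M0] unfolding space_M0 sets_M0 .
  show "{\<omega>\<in>\<Omega>. S n \<omega> \<le> x} \<in> F" using borel_measurable_le[OF S_M0 c] unfolding space_M0 sets_M0 .
qed

lemma Lc_ev:
  assumes "\<omega> \<in> Lc" "0 < \<epsilon>"
  shows "\<exists>N. \<forall>n\<ge>N. real n * (u - \<epsilon>) < S n \<omega> \<and> S n \<omega> < real n * (u + \<epsilon>)"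
proof -
  have lim: "(\<lambda>n. S n \<omega> / real n) \<longlonglongrightarrow> u" using assms(1) unfolding Lc_def S_def by auto
  obtain N where N: "\<forall>n\<ge>N. norm (S n \<omega> / real n - u) < \<epsilon>" using LIMSEQ_D[OF lim assms(2)] by blast
  have "real n * (u - \<epsilon>) < S n \<omega> \<and> S n \<omega> < real n * (u + \<epsilon>)" if n: "n \<ge> max N 1" for n
  proof -
    have n1: "0 < real n" using n by simp
    have "\<bar>S n \<omega> / real n - u\<bar> < \<epsilon>" using N n by auto
    then have "u - \<epsilon> < S n \<omega> / real n" "S n \<omega> / real n < u + \<epsilon>" by (auto simp: abs_less_iff)
    then show ?thesis using n1 by (simp add: field_simps)
  qed
  then show ?thesis by blast
qed

lemma Y_abs: "1 \<le> k \<Longrightarrow> \<omega> \<in> \<Omega> \<Longrightarrow> \<bar>Y k \<omega>\<bar> \<le> C" using bddC by auto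

lemma S_sum: "S n \<omega> = (\<Sum>k\<in>{1..n}. Y k \<omega>)" unfolding S_def by simp

lemma stat_ge: "1 \<le> k \<Longrightarrow> V {\<omega>\<in>\<Omega>. t \<le> Y k \<omega>} = V {\<omega>\<in>\<Omega>. t \<le> Y 1 \<omega>}"
  using stat1[of "{t..}" "k - 1"] by simp

lemma stat_lt: "1 \<le> k \<Longrightarrow> V {\<omega>\<in>\<Omega>. Y k \<omega> < t} = V {\<omega>\<in>\<Omega>. Y 1 \<omega> < t}"
  using stat1[of "{..<t}" "k - 1"] by simp

lemma key_up:
  assumes Cp: "0 < C" and m: "1 \<le> m" and ep: "0 < \<epsilon>"
  shows "u - \<epsilon> \<le> - C + (2*C/real m) * (\<Sum>i<m. V {\<omega>\<in>\<Omega>. Y 1 \<omega> \<ge> - C + real i * (2*C/real m)})"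
proof -
  define d where "d = 2*C/real m"
  have d: "0 < d" unfolding d_def using Cp m by simp
  define t where "t i = - C + real i * d" for i
  define gs where "gs = (\<Sum>i<m. V {\<omega>\<in>\<Omega>. Y 1 \<omega> \<ge> t i})"
  have gs0: "0 \<le> gs" unfolding gs_def using V_nonneg[OF Gt_F] by (intro sum_nonneg) auto
  define K where "K = (u - \<epsilon> + C) / d"
  have "u - \<epsilon> \<le> - C + d * gs"
  proof (cases "K \<le> 0")
    case True
    then have "u - \<epsilon> + C \<le> 0" unfolding K_def using d by (simp add: divide_le_0_iff)
    moreover have "0 \<le> d * gs" using gs0 d by simp
    ultimately show ?thesis by linarith
  next
    case False
    then have K0: "0 < K" by simp
    define A where "A n = {\<omega>\<in>\<Omega>. real n * (u - \<epsilon>) \<le> S n \<omega>}" for n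
    have AF: "A n \<in> F" for n unfolding A_def using SA_F by auto
    obtain P where P: "P \<in> \<P>" using P_ne by auto
    have bound: "K * (1 - V (\<Omega> - A n)) \<le> gs" if n: "1 \<le> n" for n
    proof -
      define I where "I = {1..n} \<times> {..<m}"
      define G where "G x = {\<omega>\<in>\<Omega>. t (snd x) \<le> Y (fst x) \<omega>}" for x
      have GF: "G x \<in> F" if "x \<in> I" for x using that unfolding G_def I_def by (intro Gt_F) auto
      have cnt: "\<forall>\<omega>\<in>A n. (\<Sum>x\<in>I. of_bool (\<omega> \<in> G x)) \<ge> real n * K"
      proof
        fix \<omega> assume \<omega>A: "\<omega> \<in> A n"
        then have \<omega>: "\<omega> \<in> \<Omega>" and Sn: "real n * (u - \<epsilon>) \<le> S n \<omega>" unfolding A_def by auto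
        have "(\<Sum>x\<in>I. of_bool (\<omega> \<in> G x)) = (\<Sum>x\<in>I. of_bool (t (snd x) \<le> Y (fst x) \<omega>) :: real)"
          unfolding G_def using \<omega> by (intro sum.cong) auto
        also have "\<dots> = (\<Sum>k\<in>{1..n}. \<Sum>i<m. of_bool (t i \<le> Y k \<omega>))"
          unfolding I_def by (rule sum_prod_split[of "\<lambda>k i. of_bool (t i \<le> Y k \<omega>)" n "{..<m}"])
        finally have eq: "(\<Sum>x\<in>I. of_bool (\<omega> \<in> G x)) = (\<Sum>k\<in>{1..n}. \<Sum>i<m. of_bool (t i \<le> Y k \<omega>) :: real)" .
        have "S n \<omega> \<le> (\<Sum>k\<in>{1..n}. - C + d * (\<Sum>i<m. of_bool (t i \<le> Y k \<omega>)))"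
          unfolding S_sum
        proof (rule sum_mono)
          fix k assume k: "k \<in> {1..n}"
          show "Y k \<omega> \<le> - C + d * (\<Sum>i<m. of_bool (t i \<le> Y k \<omega>))"
            using grid_up[OF Cp m Y_abs[of k \<omega>]] k \<omega> unfolding t_def d_def by auto
        qed
        also have "\<dots> = - real n * C + d * (\<Sum>k\<in>{1..n}. \<Sum>i<m. of_bool (t i \<le> Y k \<omega>))"
          by (simp only: sum.distrib sum_distrib_left[symmetric]) simp
        finally have "real n * (u - \<epsilon>) + real n * C \<le> d * (\<Sum>x\<in>I. of_bool (\<omega> \<in> G x))"
          using Sn eq by simp
        then have "real n * (u - \<epsilon> + C) \<le> d * (\<Sum>x\<in>I. of_bool (\<omega> \<in> G x))"
          by (simp add: algebra_simps)
        then show "(\<Sum>x\<in>I. of_bool (\<omega> \<in> G x)) \<ge> real n * K"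
          unfolding K_def using d by (simp add: field_simps)
      qed
      have "real n * K * (1 - V (\<Omega> - A n)) \<le> (\<Sum>x\<in>I. V {\<omega>\<in>\<Omega>. Y 1 \<omega> \<ge> t (snd x)})"
      proof (rule count_bound[OF P _ GF AF cnt])
        show "finite I" unfolding I_def by simp
        show "0 \<le> real n * K" using K0 by simp
        fix x assume x: "x \<in> I"
        show "V (G x) \<le> V {\<omega>\<in>\<Omega>. Y 1 \<omega> \<ge> t (snd x)}"
          unfolding G_def using stat_ge[of "fst x" "t (snd x)"] x unfolding I_def by auto
      qed
      also have "\<dots> = real n * gs" unfolding I_def gs_def by (rule sum_prod_snd)
      finally have "real n * (K * (1 - V (\<Omega> - A n))) \<le> real n * gs" by (simp add: mult.assoc)
      then show ?thesis using n by simp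
    qed
    have lim: "(\<lambda>n. V (\<Omega> - A n)) \<longlonglongrightarrow> 0"
    proof (rule V_to0)
      show "\<Omega> - A n \<in> F" for n using AF by (intro diff_F Om_F)
      show "(\<Inter>M. \<Union>n\<in>{M..}. \<Omega> - A n) \<subseteq> \<Omega> - Lc"
      proof
        fix \<omega> assume h: "\<omega> \<in> (\<Inter>M. \<Union>n\<in>{M..}. \<Omega> - A n)"
        then have \<omega>: "\<omega> \<in> \<Omega>" by auto
        have "\<omega> \<notin> Lc"
        proof
          assume "\<omega> \<in> Lc"
          then obtain N where N: "\<forall>n\<ge>N. real n * (u - \<epsilon>) < S n \<omega>"
            using Lc_ev[OF _ ep] by blast
          obtain n where "n \<ge> N" "\<omega> \<in> \<Omega> - A n" using h by blast
          then show False using N unfolding A_def by auto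
        qed
        then show "\<omega> \<in> \<Omega> - Lc" using \<omega> by auto
      qed
    qed
    have "K \<le> gs" by (rule lim_bound[OF bound lim])
    then show ?thesis unfolding K_def using d by (simp add: field_simps)
  qed
  then show ?thesis unfolding gs_def t_def d_def by simp
qed

end


lemma sum_shift1: "(\<Sum>i\<in>{1..n::nat}. f (i - 1)) = (\<Sum>i<n. (f i :: real))"
proof (induction n)
  case 0 then show ?case by simp
next
  case (Suc n)
  have "{1..Suc n} = insert (Suc n) {1..n}" by auto
  then show ?case using Suc by (simp add: lessThan_Suc add.commute)
qed

lemma sum_split0:
  assumes "\<And>i. 0 \<le> f i" "f 0 \<le> 1"
  shows "(\<Sum>i<n::nat. (f i :: real)) \<le> 1 + (\<Sum>i\<in>{1..n}. f i)"
proof (cases n)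
  case 0 then show ?thesis by simp
next
  case (Suc k)
  have "{..<n} = insert 0 {1..<n}" using Suc by auto
  then have "(\<Sum>i<n. f i) = f 0 + (\<Sum>i\<in>{1..<n}. f i)" by simp
  moreover have "(\<Sum>i\<in>{1..<n}. f i) \<le> (\<Sum>i\<in>{1..n}. f i)"
    by (rule sum_mono2) (use assms in auto)
  ultimately show ?thesis using assms(2) by linarith
qed

context cap2
begin

interpretation S: sigma_algebra \<Omega> F by (rule sa)

lemma key_low:
  assumes Cp: "0 < C" and m: "1 \<le> m" and ep: "0 < \<epsilon>"
  shows "- C + (2*C/real m) * (\<Sum>i\<in>{1..m}. lower_prob \<P> {\<omega>\<in>\<Omega>. Y 1 \<omega> \<ge> - C + real i * (2*C/real m)}) \<le> u + \<epsilon>"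
proof -
  define d where "d = 2*C/real m"
  have d: "0 < d" unfolding d_def using Cp m by simp
  define t where "t i = - C + real i * d" for i
  define hs where "hs = (\<Sum>i\<in>{1..m}. V {\<omega>\<in>\<Omega>. Y 1 \<omega> < t i})"
  have hs0: "0 \<le> hs" unfolding hs_def using V_nonneg[OF Lt_F] by (intro sum_nonneg) auto
  have gv: "lower_prob \<P> {\<omega>\<in>\<Omega>. Y 1 \<omega> \<ge> t i} = 1 - V {\<omega>\<in>\<Omega>. Y 1 \<omega> < t i}" for i
  proof -
    have "\<Omega> - {\<omega>\<in>\<Omega>. Y 1 \<omega> \<ge> t i} = {\<omega>\<in>\<Omega>. Y 1 \<omega> < t i}" by auto
    then show ?thesis using v_eq[OF Gt_F[of 1 "t i"]] by simp
  qed
  have sumgv: "(\<Sum>i\<in>{1..m}. lower_prob \<P> {\<omega>\<in>\<Omega>. Y 1 \<omega> \<ge> t i}) = real m - hs"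
    unfolding gv hs_def by (simp add: sum_subtractf)
  define K where "K = real m - (u + \<epsilon> + C) / d"
  have "K \<le> hs"
  proof (cases "K \<le> 0")
    case True then show ?thesis using hs0 by linarith
  next
    case False
    then have K0: "0 < K" by simp
    define A where "A n = {\<omega>\<in>\<Omega>. S n \<omega> \<le> real n * (u + \<epsilon>)}" for n
    have AF: "A n \<in> F" for n unfolding A_def using SA_F by auto
    obtain P where P: "P \<in> \<P>" using P_ne by auto
    have bound: "K * (1 - V (\<Omega> - A n)) \<le> hs" if n: "1 \<le> n" for n
    proof -
      define I where "I = {1..n} \<times> {1..m}"
      define G where "G x = {\<omega>\<in>\<Omega>. Y (fst x) \<omega> < t (snd x)}" for x
      have GF: "G x \<in> F" if "x \<in> I" for x using that unfolding G_def I_def by (intro Lt_F) auto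
      have cnt: "\<forall>\<omega>\<in>A n. (\<Sum>x\<in>I. of_bool (\<omega> \<in> G x)) \<ge> real n * K"
      proof
        fix \<omega> assume \<omega>A: "\<omega> \<in> A n"
        then have \<omega>: "\<omega> \<in> \<Omega>" and Sn: "S n \<omega> \<le> real n * (u + \<epsilon>)" unfolding A_def by auto
        define X where "X = (\<Sum>k\<in>{1..n}. \<Sum>i\<in>{1..m}. of_bool (t i \<le> Y k \<omega>) :: real)"
        have "(\<Sum>x\<in>I. of_bool (\<omega> \<in> G x)) = (\<Sum>x\<in>I. 1 - of_bool (t (snd x) \<le> Y (fst x) \<omega>) :: real)"
          unfolding G_def using \<omega> by (intro sum.cong) auto
        also have "\<dots> = (\<Sum>k\<in>{1..n}. \<Sum>i\<in>{1..m}. 1 - of_bool (t i \<le> Y k \<omega>))"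
          unfolding I_def by (rule sum_prod_split[of "\<lambda>k i. 1 - of_bool (t i \<le> Y k \<omega>)" n "{1..m}"])
        also have "\<dots> = real n * real m - X"
          unfolding X_def by (simp add: sum_subtractf)
        finally have eq: "(\<Sum>x\<in>I. of_bool (\<omega> \<in> G x)) = real n * real m - X" .
        have "(\<Sum>k\<in>{1..n}. - C + d * (\<Sum>i\<in>{1..m}. of_bool (t i \<le> Y k \<omega>))) \<le> S n \<omega>"
          unfolding S_sum
        proof (rule sum_mono)
          fix k assume k: "k \<in> {1..n}"
          show "- C + d * (\<Sum>i\<in>{1..m}. of_bool (t i \<le> Y k \<omega>)) \<le> Y k \<omega>"
            using grid_low[OF Cp m Y_abs[of k \<omega>]] k \<omega> unfolding t_def d_def by auto
        qed
        moreover have "(\<Sum>k\<in>{1..n}. - C + d * (\<Sum>i\<in>{1..m}. of_bool (t i \<le> Y k \<omega>))) = - real n * C + d * X"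
          unfolding X_def by (simp only: sum.distrib sum_distrib_left[symmetric]) simp
        ultimately have "d * X \<le> real n * (u + \<epsilon> + C)" using Sn by (simp add: algebra_simps)
        then have "X \<le> real n * ((u + \<epsilon> + C) / d)" using d by (simp add: field_simps)
        then have "real n * K \<le> real n * real m - X" unfolding K_def by (simp add: algebra_simps)
        then show "(\<Sum>x\<in>I. of_bool (\<omega> \<in> G x)) \<ge> real n * K" using eq by simp
      qed
      have "real n * K * (1 - V (\<Omega> - A n)) \<le> (\<Sum>x\<in>I. V {\<omega>\<in>\<Omega>. Y 1 \<omega> < t (snd x)})"
      proof (rule count_bound[OF P _ GF AF cnt])
        show "finite I" unfolding I_def by simp
        show "0 \<le> real n * K" using K0 by simp
        fix x assume x: "x \<in> I"
        show "V (G x) \<le> V {\<omega>\<in>\<Omega>. Y 1 \<omega> < t (snd x)}"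
          unfolding G_def using stat_lt[of "fst x" "t (snd x)"] x unfolding I_def by auto
      qed
      also have "\<dots> = real n * hs" unfolding I_def hs_def by (rule sum_prod_snd)
      finally have "real n * (K * (1 - V (\<Omega> - A n))) \<le> real n * hs" by (simp add: mult.assoc)
      then show ?thesis using n by simp
    qed
    have lim: "(\<lambda>n. V (\<Omega> - A n)) \<longlonglongrightarrow> 0"
    proof (rule V_to0)
      show "\<Omega> - A n \<in> F" for n using AF by (intro diff_F Om_F)
      show "(\<Inter>M. \<Union>n\<in>{M..}. \<Omega> - A n) \<subseteq> \<Omega> - Lc"
      proof
        fix \<omega> assume h: "\<omega> \<in> (\<Inter>M. \<Union>n\<in>{M..}. \<Omega> - A n)"
        then have \<omega>: "\<omega> \<in> \<Omega>" by auto
        have "\<omega> \<notin> Lc"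
        proof
          assume "\<omega> \<in> Lc"
          then obtain N where N: "\<forall>n\<ge>N. S n \<omega> < real n * (u + \<epsilon>)"
            using Lc_ev[OF _ ep] by blast
          obtain n where "n \<ge> N" "\<omega> \<in> \<Omega> - A n" using h by blast
          then show False using N unfolding A_def by auto
        qed
        then show "\<omega> \<in> \<Omega> - Lc" using \<omega> by auto
      qed
    qed
    show "K \<le> hs" by (rule lim_bound[OF bound lim])
  qed
  then have "d * real m - d * hs \<le> u + \<epsilon> + C" unfolding K_def using d by (simp add: field_simps)
  moreover have "d * real m = 2 * C" unfolding d_def using m by simp
  ultimately have "- C + d * (real m - hs) \<le> u + \<epsilon>" by (simp add: algebra_simps)
  then have "- C + d * (\<Sum>i\<in>{1..m}. lower_prob \<P> {\<omega>\<in>\<Omega>. Y 1 \<omega> \<ge> t i}) \<le> u + \<epsilon>"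
    by (simp only: sumgv)
  then show ?thesis unfolding t_def d_def .
qed

end


context cap2
begin

interpretation S: sigma_algebra \<Omega> F by (rule sa)

lemma antig_V: "0 < C \<Longrightarrow> antig (\<lambda>t. V {\<omega>\<in>\<Omega>. Y 1 \<omega> \<ge> t}) C"
proof (unfold_locales)
  fix s t :: real assume "s \<le> t"
  then have "{\<omega>\<in>\<Omega>. Y 1 \<omega> \<ge> t} \<subseteq> {\<omega>\<in>\<Omega>. Y 1 \<omega> \<ge> s}" by auto
  then show "V {\<omega>\<in>\<Omega>. Y 1 \<omega> \<ge> t} \<le> V {\<omega>\<in>\<Omega>. Y 1 \<omega> \<ge> s}"
    by (intro V_mono Gt_F) auto
next
  fix t :: real assume t: "t \<le> - C"
  have "{\<omega>\<in>\<Omega>. Y 1 \<omega> \<ge> t} = \<Omega>" using Y_abs[of 1] t by (force simp: abs_le_iff)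
  then show "V {\<omega>\<in>\<Omega>. Y 1 \<omega> \<ge> t} = 1" using V_Om by simp
next
  fix t :: real assume t: "C < t"
  have e: "{\<omega>\<in>\<Omega>. Y 1 \<omega> \<ge> t} = {}" using Y_abs[of 1] t by (force simp: abs_le_iff)
  show "V {\<omega>\<in>\<Omega>. Y 1 \<omega> \<ge> t} = 0" unfolding e by (rule V_empty)
qed

lemma antig_v: "0 < C \<Longrightarrow> antig (\<lambda>t. lower_prob \<P> {\<omega>\<in>\<Omega>. Y 1 \<omega> \<ge> t}) C"
proof (unfold_locales)
  fix s t :: real assume "s \<le> t"
  then have "\<Omega> - {\<omega>\<in>\<Omega>. Y 1 \<omega> \<ge> s} \<subseteq> \<Omega> - {\<omega>\<in>\<Omega>. Y 1 \<omega> \<ge> t}" by auto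
  then have "V (\<Omega> - {\<omega>\<in>\<Omega>. Y 1 \<omega> \<ge> s}) \<le> V (\<Omega> - {\<omega>\<in>\<Omega>. Y 1 \<omega> \<ge> t})"
    by (intro V_mono diff_F Om_F Gt_F) auto
  then show "lower_prob \<P> {\<omega>\<in>\<Omega>. Y 1 \<omega> \<ge> t} \<le> lower_prob \<P> {\<omega>\<in>\<Omega>. Y 1 \<omega> \<ge> s}"
    using v_eq[OF Gt_F[of 1 s]] v_eq[OF Gt_F[of 1 t]] by simp
next
  fix t :: real assume t: "t \<le> - C"
  have "{\<omega>\<in>\<Omega>. Y 1 \<omega> \<ge> t} = \<Omega>" using Y_abs[of 1] t by (force simp: abs_le_iff)
  then show "lower_prob \<P> {\<omega>\<in>\<Omega>. Y 1 \<omega> \<ge> t} = 1" using v_eq[OF Om_F] V_empty by simp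
next
  fix t :: real assume t: "C < t"
  have e: "{\<omega>\<in>\<Omega>. Y 1 \<omega> \<ge> t} = {}" using Y_abs[of 1] t by (force simp: abs_le_iff)
  show "lower_prob \<P> {\<omega>\<in>\<Omega>. Y 1 \<omega> \<ge> t} = 0" unfolding e using v_eq[OF empty_F] V_Om by simp
qed

lemma choose_p:
  assumes Cp: "0 < C" and e: "0 < e"
  obtains p :: nat where "1 \<le> p" "C / real p < e"
proof -
  define p where "p = nat \<lceil>C / e\<rceil> + 1"
  have "C / e \<le> real (nat \<lceil>C / e\<rceil>)" by (rule real_nat_ceiling_ge)
  then have "C / e < real p" unfolding p_def by simp
  then have "C < e * real p" using e by (simp add: field_simps)
  moreover have "0 < real p" unfolding p_def by simp
  ultimately have "C / real p < e" by (simp add: field_simps)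
  moreover have "1 \<le> p" unfolding p_def by simp
  ultimately show ?thesis using that by blast
qed

lemma choquet_up:
  assumes Cp: "0 < C"
  shows "u \<le> choquet \<Omega> V (Y 1)"
proof -
  interpret A: antig "\<lambda>t. V {\<omega>\<in>\<Omega>. Y 1 \<omega> \<ge> t}" C by (rule antig_V[OF Cp])
  have ch: "choquet \<Omega> V (Y 1) = A.I" unfolding choquet_def A.I_def ..
  show ?thesis
  proof (rule field_le_epsilon)
    fix e :: real assume e: "0 < e"
    then have e2: "0 < e / 2" by simp
    obtain p :: nat where p: "1 \<le> p" "C / real p < e / 2" using choose_p[OF Cp e2] by blast
    define \<delta> where "\<delta> = C / real p"
    have \<delta>0: "0 < \<delta>" unfolding \<delta>_def using Cp p by simp
    define h where "h i = V {\<omega>\<in>\<Omega>. Y 1 \<omega> \<ge> - C + real i * \<delta>}" for i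
    have eqd: "2*C/real (2*p) = \<delta>" unfolding \<delta>_def by simp
    have k: "u - e/2 \<le> - C + \<delta> * (\<Sum>i<2*p. h i)"
      using key_up[OF Cp _ e2, of "2*p"] p unfolding eqd h_def by simp
    have h0: "0 \<le> h i" for i unfolding h_def by (rule A.g_ge0)
    have h1: "h 0 \<le> 1" unfolding h_def by (rule A.g_le1)
    have sp: "(\<Sum>i<2*p. h i) \<le> 1 + (\<Sum>i\<in>{1..2*p}. h i)"
      by (rule sum_split0[where f=h, OF h0 h1])
    have sw: "- C + \<delta> * (\<Sum>i\<in>{1..2*p}. h i) \<le> A.I"
      using A.I_sandwich(1)[OF p(1)] unfolding h_def \<delta>_def .
    have "\<delta> * (\<Sum>i<2*p. h i) \<le> \<delta> * (1 + (\<Sum>i\<in>{1..2*p}. h i))"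
      using sp \<delta>0 by (intro mult_left_mono) auto
    then have "u - e/2 \<le> \<delta> + A.I" using k sw by (simp add: algebra_simps)
    then show "u \<le> choquet \<Omega> V (Y 1) + e" using ch p(2) unfolding \<delta>_def by linarith
  qed
qed

lemma choquet_low:
  assumes Cp: "0 < C"
  shows "choquet \<Omega> (lower_prob \<P>) (Y 1) \<le> u"
proof -
  interpret A: antig "\<lambda>t. lower_prob \<P> {\<omega>\<in>\<Omega>. Y 1 \<omega> \<ge> t}" C by (rule antig_v[OF Cp])
  have ch: "choquet \<Omega> (lower_prob \<P>) (Y 1) = A.I" unfolding choquet_def A.I_def ..
  show ?thesis
  proof (rule field_le_epsilon)
    fix e :: real assume e: "0 < e"
    then have e2: "0 < e / 2" by simp
    obtain p :: nat where p: "1 \<le> p" "C / real p < e / 2" using choose_p[OF Cp e2] by blast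
    define \<delta> where "\<delta> = C / real p"
    have \<delta>0: "0 < \<delta>" unfolding \<delta>_def using Cp p by simp
    define h where "h i = lower_prob \<P> {\<omega>\<in>\<Omega>. Y 1 \<omega> \<ge> - C + real i * \<delta>}" for i
    have eqd: "2*C/real (2*p) = \<delta>" unfolding \<delta>_def by simp
    have k: "- C + \<delta> * (\<Sum>i\<in>{1..2*p}. h i) \<le> u + e/2"
      using key_low[OF Cp _ e2, of "2*p"] p unfolding eqd h_def by simp
    have h0: "0 \<le> h i" for i unfolding h_def by (rule A.g_ge0)
    have h1: "h 0 \<le> 1" unfolding h_def by (rule A.g_le1)
    have sp: "(\<Sum>i<2*p. h i) \<le> 1 + (\<Sum>i\<in>{1..2*p}. h i)"
      by (rule sum_split0[where f=h, OF h0 h1])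
    have sw: "A.I \<le> - C + \<delta> * (\<Sum>i\<in>{1..2*p}. h (i - 1))"
      using A.I_sandwich(2)[OF p(1)] unfolding h_def \<delta>_def .
    have sh: "(\<Sum>i\<in>{1..2*p}. h (i - 1)) = (\<Sum>i<2*p. h i)" by (rule sum_shift1)
    have "\<delta> * (\<Sum>i<2*p. h i) \<le> \<delta> * (1 + (\<Sum>i\<in>{1..2*p}. h i))"
      using sp \<delta>0 by (intro mult_left_mono) auto
    then have "A.I \<le> \<delta> + u + e/2" using k sw sh by (simp add: algebra_simps)
    then show "choquet \<Omega> (lower_prob \<P>) (Y 1) \<le> u + e" using ch p(2) unfolding \<delta>_def by linarith
  qed
qed

end

theorem corollary2:
  fixes \<Omega> :: "'a set" and F :: "'a set set" and \<P> :: "('a set \<Rightarrow> real) set"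
    and Y :: "nat \<Rightarrow> 'a \<Rightarrow> real"
  assumes sa: "sigma_algebra \<Omega> F"
    and P_ne: "\<P> \<noteq> {}"
    and P_fa: "\<forall>P\<in>\<P>. fa_prob \<Omega> F P"
    and contV: "continuous_setfun F (upper_prob \<P>)"
    and contv: "continuous_setfun F (lower_prob \<P>)"
    and meas: "\<forall>n\<ge>1. \<forall>B\<in>sets borel. Y n -` B \<inter> \<Omega> \<in> F"
    and bdd: "\<exists>C. \<forall>n\<ge>1. \<forall>\<omega>\<in>\<Omega>. \<bar>Y n \<omega>\<bar> \<le> C"
    and stat: "stationary \<Omega> (upper_prob \<P>) Y"
    and indep: "\<forall>n\<ge>1. indep_sigma (upper_prob \<P>)
                   (gen_sigma \<Omega> Y {1..n}) (gen_sigma \<Omega> Y {n+1..})"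
  shows "\<exists>c::real.
     lower_prob \<P> {\<omega>\<in>\<Omega>. (\<lambda>n. (\<Sum>k=1..n. Y k \<omega>) / real n) \<longlonglongrightarrow> c} = 1 \<and>
     (concave_setfun F (upper_prob \<P>) \<longrightarrow>
        choquet \<Omega> (lower_prob \<P>) (Y 1) \<le> c \<and> c \<le> choquet \<Omega> (upper_prob \<P>) (Y 1))"
proof -
  obtain C0 where C0: "\<forall>n\<ge>1. \<forall>\<omega>\<in>\<Omega>. \<bar>Y n \<omega>\<bar> \<le> C0" using bdd by blast
  define C where "C = \<bar>C0\<bar> + 1"
  have Cp: "0 < C" unfolding C_def by simp
  have bddC: "\<forall>n\<ge>1. \<forall>\<omega>\<in>\<Omega>. \<bar>Y n \<omega>\<bar> \<le> C" using C0 unfolding C_def by force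
  have C0': "0 \<le> C" using Cp by simp
  interpret X: cap2 \<Omega> F \<P> Y C
    by (rule cap2.intro[OF cap_setting.intro[OF sa P_ne P_fa contV meas stat indep] cap2_axioms.intro[OF bddC C0']])
  show ?thesis
  proof (intro exI[of _ X.u] conjI impI)
    show "lower_prob \<P> {\<omega>\<in>\<Omega>. (\<lambda>n. (\<Sum>k=1..n. Y k \<omega>) / real n) \<longlonglongrightarrow> X.u} = 1"
      using X.lower_Lc unfolding X.Lc_def .
    show "choquet \<Omega> (lower_prob \<P>) (Y 1) \<le> X.u" by (rule X.choquet_low[OF Cp])
    show "X.u \<le> choquet \<Omega> (upper_prob \<P>) (Y 1)" by (rule X.choquet_up[OF Cp])
  qed
qed


end
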